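(* For any $(\bar\Sigma_{\rho_0},\dots,\bar\Sigma_{\rho_{T-1}})\in\mathcal M_T$ and $(S_0,\dots,S_{T-1})\in\mathcal M_T$, $$\lim_{t\to+0}\frac{\check J(\bar\Sigma_{\rho_0}+t(S_0-\bar\Sigma_{\rho_0}),\dots,\bar\Sigma_{\rho_{T-1}}+t(S_{T-1}-\bar\Sigma_{\rho_{T-1}}))-\check J(\bar\Sigma_{\rho_0},\dots,\bar\Sigma_{\rho_{T-1}})}{t}=\sum_{k=0}^{T-1}\mathrm{Tr}\big[\check J'_k(\bar\Sigma_{\rho_0},\dots,\bar\Sigma_{\rho_{T-1}})(S_k-\bar\Sigma_{\rho_k})\big],$$ where $\check J'_k:\mathcal M_T\to\mathbb S^m$ is defined by $\check J'_k(\Sigma_{\rho_0},\dots,\Sigma_{\rho_{T-1}})=\frac\varepsilon2L_k(\Sigma_{\rho_k}+\Sigma_{Q_k}-E_k\Sigma_{x_k}E_k^\top)L_k$ with $E_k=\Sigma_{Q_k}B_k^\top\Pi_{k+1}A_k/\varepsilon$ and $L_k=(\Sigma_{Q_k}+\Sigma_{\rho_k})^{-1}\succ0$.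
   Context: Fix integers $n,m,T\ge 1$, $\varepsilon>0$, matrices $A_k\in\mathbb R^{n\times n}$, $B_k\in\mathbb R^{n\times m}$, and symmetric positive definite $R_k\in\mathbb R^{m\times m}$, $\Sigma_{w_k}\in\mathbb R^{n\times n}$ ($k=0,\dots,T-1$), $F,\Sigma_{x_{\mathrm{ini}}}\in\mathbb R^{n\times n}$. $\mathbb S^m$ = symmetric $m\times m$ matrices, $\mathbb S^m_{\succeq0}$ the PSD ones, $\mathcal M_T=(\mathbb S^m_{\succeq0})^T$; $\Sigma^{1/2}$ PSD square root, $|\cdot|$ determinant. For $(\Sigma_{\rho_0},\dots,\Sigma_{\rho_{T-1}})\in\mathcal M_T$ define backwards $\Pi_T=F$, $C_k=(R_k+B_k^\top\Pi_{k+1}B_k)/\varepsilon$, $\Pi_k=A_k^\top\Pi_{k+1}A_k-\frac1\varepsilon A_k^\top\Pi_{k+1}B_k\Sigma_{\rho_k}^{1/2}(I+\Sigma_{\rho_k}^{1/2}C_k\Sigma_{\rho_k}^{1/2})^{-1}\Sigma_{\rho_k}^{1/2}B_k^\top\Pi_{k+1}A_k$, $\Sigma_{Q_k}=\varepsilon(R_k+B_k^\top\Pi_{k+1}B_k)^{-1}$; set $\Sigma_{\pi_k}=\Sigma_{\rho_k}^{1/2}(I+\Sigma_{\rho_k}^{1/2}C_k\Sigma_{\rho_k}^{1/2})^{-1}\Sigma_{\rho_k}^{1/2}$, $P_k=-\frac1\varepsilon\Sigma_{\pi_k}B_k^\top\Pi_{k+1}A_k$, and forwards $\Sigma_{x_0}=\Sigma_{x_{\mathrm{ini}}}$,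 $\Sigma_{x_{k+1}}=(A_k+B_kP_k)\Sigma_{x_k}(A_k+B_kP_k)^\top+B_k\Sigma_{\pi_k}B_k^\top+\Sigma_{w_k}$ (state covariance under the policy $u_k\sim\mathcal N(P_kx_k,\Sigma_{\pi_k})$). Define $\check J(\Sigma_{\rho_0},\dots,\Sigma_{\rho_{T-1}})=\frac12\Big[\mathrm{Tr}(\Pi_0\Sigma_{x_{\mathrm{ini}}})+\sum_{k=0}^{T-1}\Big(\varepsilon\log\frac{|\Sigma_{\rho_k}+\Sigma_{Q_k}|}{|\Sigma_{Q_k}|}+\mathrm{Tr}(\Pi_{k+1}\Sigma_{w_k})\Big)\Big]$. *)

theory Defs
  imports "HOL-Analysis.Analysis"
begin


definition sym_mat :: "real^'n^'n \<Rightarrow> bool" where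
  "sym_mat M \<longleftrightarrow> transpose M = M"

definition psd_mat :: "real^'n^'n \<Rightarrow> bool" where
  "psd_mat M \<longleftrightarrow> sym_mat M \<and> (\<forall>x. 0 \<le> x \<bullet> (M *v x))"

definition pd_mat :: "real^'n^'n \<Rightarrow> bool" where
  "pd_mat M \<longleftrightarrow> sym_mat M \<and> (\<forall>x. x \<noteq> 0 \<longrightarrow> 0 < x \<bullet> (M *v x))"

definition psd_sqrt :: "real^'n^'n \<Rightarrow> real^'n^'n" where
  "psd_sqrt M = (THE S. psd_mat S \<and> S ** S = M)"

definition Cmat :: "real \<Rightarrow> real^'m^'n \<Rightarrow> real^'m^'m \<Rightarrow> real^'n^'n \<Rightarrow> real^'m^'m" where
  "Cmat eps Bk Rk P = (1/eps) *\<^sub>R (Rk + transpose Bk ** P ** Bk)"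

definition Sig_pi_step :: "real \<Rightarrow> real^'m^'n \<Rightarrow> real^'m^'m \<Rightarrow> real^'m^'m \<Rightarrow> real^'n^'n \<Rightarrow> real^'m^'m" where
  "Sig_pi_step eps Bk Rk Sk P =
     psd_sqrt Sk ** matrix_inv (mat 1 + psd_sqrt Sk ** Cmat eps Bk Rk P ** psd_sqrt Sk) ** psd_sqrt Sk"

text \<open>Pi_k from Pi_{k+1} = P.\<close>
definition Pi_step :: "real \<Rightarrow> real^'n^'n \<Rightarrow> real^'m^'n \<Rightarrow> real^'m^'m \<Rightarrow> real^'m^'m \<Rightarrow> real^'n^'n \<Rightarrow> real^'n^'n" where
  "Pi_step eps Ak Bk Rk Sk P =
     transpose Ak ** P ** Ak
     - (1/eps) *\<^sub>R (transpose Ak ** P ** Bk ** Sig_pi_step eps Bk Rk Sk P ** transpose Bk ** P ** Ak)"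

text \<open>Backward recursion: Pi_rev j = Pi_{T-j}.\<close>
fun Pi_rev :: "real \<Rightarrow> (nat \<Rightarrow> real^'n^'n) \<Rightarrow> (nat \<Rightarrow> real^'m^'n) \<Rightarrow> (nat \<Rightarrow> real^'m^'m)
    \<Rightarrow> real^'n^'n \<Rightarrow> nat \<Rightarrow> (nat \<Rightarrow> real^'m^'m) \<Rightarrow> nat \<Rightarrow> real^'n^'n" where
  "Pi_rev eps A B R F T S 0 = F"
| "Pi_rev eps A B R F T S (Suc j) =
     (let k = T - Suc j in Pi_step eps (A k) (B k) (R k) (S k) (Pi_rev eps A B R F T S j))"

definition Pi :: "real \<Rightarrow> (nat \<Rightarrow> real^'n^'n) \<Rightarrow> (nat \<Rightarrow> real^'m^'n) \<Rightarrow> (nat \<Rightarrow> real^'m^'m)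
    \<Rightarrow> real^'n^'n \<Rightarrow> nat \<Rightarrow> (nat \<Rightarrow> real^'m^'m) \<Rightarrow> nat \<Rightarrow> real^'n^'n" where
  "Pi eps A B R F T S k = Pi_rev eps A B R F T S (T - k)"

definition Sig_Q :: "real \<Rightarrow> (nat \<Rightarrow> real^'n^'n) \<Rightarrow> (nat \<Rightarrow> real^'m^'n) \<Rightarrow> (nat \<Rightarrow> real^'m^'m)
    \<Rightarrow> real^'n^'n \<Rightarrow> nat \<Rightarrow> (nat \<Rightarrow> real^'m^'m) \<Rightarrow> nat \<Rightarrow> real^'m^'m" where
  "Sig_Q eps A B R F T S k =
     eps *\<^sub>R matrix_inv (R k + transpose (B k) ** Pi eps A B R F T S (Suc k) ** B k)"

definition Sig_pi :: "real \<Rightarrow> (nat \<Rightarrow> real^'n^'n) \<Rightarrow> (nat \<Rightarrow> real^'m^'n) \<Rightarrow> (nat \<Rightarrow> real^'m^'m)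
    \<Rightarrow> real^'n^'n \<Rightarrow> nat \<Rightarrow> (nat \<Rightarrow> real^'m^'m) \<Rightarrow> nat \<Rightarrow> real^'m^'m" where
  "Sig_pi eps A B R F T S k = Sig_pi_step eps (B k) (R k) (S k) (Pi eps A B R F T S (Suc k))"

definition Pgain :: "real \<Rightarrow> (nat \<Rightarrow> real^'n^'n) \<Rightarrow> (nat \<Rightarrow> real^'m^'n) \<Rightarrow> (nat \<Rightarrow> real^'m^'m)
    \<Rightarrow> real^'n^'n \<Rightarrow> nat \<Rightarrow> (nat \<Rightarrow> real^'m^'m) \<Rightarrow> nat \<Rightarrow> real^'n^'m" where
  "Pgain eps A B R F T S k =
     - (1/eps) *\<^sub>R (Sig_pi eps A B R F T S k ** transpose (B k) ** Pi eps A B R F T S (Suc k) ** A k)"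

fun Sig_x :: "real \<Rightarrow> (nat \<Rightarrow> real^'n^'n) \<Rightarrow> (nat \<Rightarrow> real^'m^'n) \<Rightarrow> (nat \<Rightarrow> real^'m^'m)
    \<Rightarrow> real^'n^'n \<Rightarrow> (nat \<Rightarrow> real^'n^'n) \<Rightarrow> real^'n^'n \<Rightarrow> nat \<Rightarrow> (nat \<Rightarrow> real^'m^'m) \<Rightarrow> nat \<Rightarrow> real^'n^'n" where
  "Sig_x eps A B R F Sw Xini T S 0 = Xini"
| "Sig_x eps A B R F Sw Xini T S (Suc k) =
     (let M = A k + B k ** Pgain eps A B R F T S k in
        M ** Sig_x eps A B R F Sw Xini T S k ** transpose M
        + B k ** Sig_pi eps A B R F T S k ** transpose (B k) + Sw k)"

definition Jcheck :: "real \<Rightarrow> (nat \<Rightarrow> real^'n^'n) \<Rightarrow> (nat \<Rightarrow> real^'m^'n) \<Rightarrow> (nat \<Rightarrow> real^'m^'m)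
    \<Rightarrow> real^'n^'n \<Rightarrow> (nat \<Rightarrow> real^'n^'n) \<Rightarrow> real^'n^'n \<Rightarrow> nat \<Rightarrow> (nat \<Rightarrow> real^'m^'m) \<Rightarrow> real" where
  "Jcheck eps A B R F Sw Xini T S =
     (1/2) * (trace (Pi eps A B R F T S 0 ** Xini)
       + (\<Sum>k<T. eps * ln (det (S k + Sig_Q eps A B R F T S k) / det (Sig_Q eps A B R F T S k))
                 + trace (Pi eps A B R F T S (Suc k) ** Sw k)))"

definition Jprime :: "real \<Rightarrow> (nat \<Rightarrow> real^'n^'n) \<Rightarrow> (nat \<Rightarrow> real^'m^'n) \<Rightarrow> (nat \<Rightarrow> real^'m^'m)
    \<Rightarrow> real^'n^'n \<Rightarrow> (nat \<Rightarrow> real^'n^'n) \<Rightarrow> real^'n^'n \<Rightarrow> nat \<Rightarrow> (nat \<Rightarrow> real^'m^'m) \<Rightarrow> nat \<Rightarrow> real^'m^'m" where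
  "Jprime eps A B R F Sw Xini T S k =
     (let SQ = Sig_Q eps A B R F T S k;
          E = (1/eps) *\<^sub>R (SQ ** transpose (B k) ** Pi eps A B R F T S (Suc k) ** A k);
          L = matrix_inv (SQ + S k)
      in (eps/2) *\<^sub>R (L ** (S k + SQ - E ** Sig_x eps A B R F Sw Xini T S k ** transpose E) ** L))"

end

theory Submission
  imports Defs
begin



lemma mm_add_r: "((A::real^'a^'b) + B) ** (C::real^'c^'a) = A ** C + B ** C"
  by (vector matrix_matrix_mult_def sum.distrib[symmetric] field_simps)
lemma mm_diff_l: "(A::real^'a^'b) ** ((B::real^'c^'a) - C) = A ** B - A ** C"
  by (vector matrix_matrix_mult_def sum_subtractf[symmetric] field_simps)
lemma mm_diff_r: "((A::real^'a^'b) - B) ** (C::real^'c^'a) = A ** C - B ** C"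
  by (vector matrix_matrix_mult_def sum_subtractf[symmetric] field_simps)
lemma mm_neg_l: "(-(A::real^'a^'b)) ** (C::real^'c^'a) = - (A ** C)"
  by (vector matrix_matrix_mult_def sum_negf[symmetric])
lemma mm_neg_r: "(A::real^'a^'b) ** (-(C::real^'c^'a)) = - (A ** C)"
  by (vector matrix_matrix_mult_def sum_negf[symmetric])
lemma mm_scale_l: "(c *\<^sub>R (A::real^'a^'b)) ** (C::real^'c^'a) = c *\<^sub>R (A ** C)"
  using scalar_matrix_assoc[of c A C] by simp
lemma mm_scale_r: "(A::real^'a^'b) ** (c *\<^sub>R (C::real^'c^'a)) = c *\<^sub>R (A ** C)"
  using matrix_scalar_ac[of A c C] scalar_matrix_assoc[of c A C] by simp
lemma tr_add: "transpose ((A::real^'a^'b) + B) = transpose A + transpose B"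
  by (vector transpose_def)
lemma tr_diff: "transpose ((A::real^'a^'b) - B) = transpose A - transpose B"
  by (vector transpose_def)
lemma tr_neg: "transpose (-(A::real^'a^'b)) = - transpose A"
  by (vector transpose_def)
lemma tr_zero: "transpose (0::real^'a^'b) = 0"
  by (vector transpose_def)
lemma trace_add: "trace ((A::real^'a^'a) + B) = trace A + trace B"
  by (simp add: trace_def sum.distrib)
lemma trace_diff: "trace ((A::real^'a^'a) - B) = trace A - trace B"
  by (simp add: trace_def sum_subtractf)
lemma trace_neg: "trace (-(A::real^'a^'a)) = - trace A"
  by (simp add: trace_def sum_negf)
lemma trace_scale: "trace (c *\<^sub>R (A::real^'a^'a)) = c * trace A"
  by (simp add: trace_def sum_distrib_left)
lemma trace_zero: "trace (0::real^'a^'a) = 0"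
  by (simp add: trace_def)
lemma trace_transpose: "trace (transpose (A::real^'a^'a)) = trace A"
  by (simp add: trace_def transpose_def)

lemmas mm_simps = mm_add_r matrix_add_ldistrib mm_diff_l mm_diff_r mm_neg_l mm_neg_r mm_scale_l mm_scale_r
  tr_add tr_diff tr_neg tr_zero transpose_scalar matrix_transpose_mul

lemma inv_unique_right:
  fixes A B :: "real^'n^'n"
  assumes "A ** B = mat 1" shows "matrix_inv A = B"
proof -
  have inv: "invertible A" using assms invertible_right_inverse by blast
  have "matrix_inv A ** A = mat 1"
    using inv unfolding invertible_def matrix_inv_def by (rule someI2_ex) auto
  then have "matrix_inv A = matrix_inv A ** (A ** B)" using assms by simp
  also have "\<dots> = B" by (simp add: matrix_mul_assoc \<open>matrix_inv A ** A = mat 1\<close>)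
  finally show ?thesis .
qed

lemma inv_left:
  fixes A :: "real^'n^'n"
  assumes "invertible A" shows "matrix_inv A ** A = mat 1"
  using assms unfolding invertible_def matrix_inv_def by (rule someI2_ex) auto

lemma inv_right:
  fixes A :: "real^'n^'n"
  assumes "invertible A" shows "A ** matrix_inv A = mat 1"
  using assms unfolding invertible_def matrix_inv_def by (rule someI2_ex) auto

lemma inv_invertible:
  fixes A :: "real^'n^'n"
  assumes "invertible A" shows "invertible (matrix_inv A)"
  using inv_left[OF assms] invertible_right_inverse by blast

lemma inv_inv:
  fixes A :: "real^'n^'n"
  assumes "invertible A" shows "matrix_inv (matrix_inv A) = A"
  using inv_unique_right[OF inv_left[OF assms]] .

lemma inv_transpose:
  fixes A :: "real^'n^'n"
  assumes "invertible A" shows "transpose (matrix_inv A) = matrix_inv (transpose A)"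
proof -
  have "transpose A ** transpose (matrix_inv A) = mat 1"
    by (metis inv_left[OF assms] matrix_transpose_mul transpose_mat)
  then show ?thesis using inv_unique_right by metis
qed

lemma inv_mult:
  fixes A B :: "real^'n^'n"
  assumes "invertible A" "invertible B"
  shows "matrix_inv (A ** B) = matrix_inv B ** matrix_inv A"
proof -
  have "A ** B ** (matrix_inv B ** matrix_inv A) = mat 1"
    by (metis assms inv_right matrix_mul_assoc matrix_mul_rid)
  then show ?thesis by (rule inv_unique_right)
qed

lemma inv_scaleR:
  fixes A :: "real^'n^'n"
  assumes "invertible A" "c \<noteq> 0"
  shows "matrix_inv (c *\<^sub>R A) = (1/c) *\<^sub>R matrix_inv A"
proof -
  have "(c *\<^sub>R A) ** ((1/c) *\<^sub>R matrix_inv A) = mat 1"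
    using assms by (simp add: matrix_scalar_ac inv_right scalar_matrix_assoc[symmetric])
  then show ?thesis by (rule inv_unique_right)
qed

lemma quad_congr:
  fixes X :: "real^'a^'b" and A :: "real^'b^'b"
  shows "x \<bullet> ((transpose X ** A ** X) *v x) = (X *v x) \<bullet> (A *v (X *v x))"
proof -
  have e: "(transpose X ** A ** X) *v x = transpose X *v (A *v (X *v x))" by (simp add: matrix_vector_mul_assoc matrix_mul_assoc)
  have "x \<bullet> (transpose X *v z) = (X *v x) \<bullet> z" for z
  proof -
    have "x \<bullet> (transpose X *v z) = x \<bullet> (z v* X)" by simp
    also have "\<dots> = (z v* X) \<bullet> x" by (rule inner_commute)
    also have "\<dots> = z \<bullet> (X *v x)" by (rule dot_lmul_matrix)
    also have "\<dots> = (X *v x) \<bullet> z" by (rule inner_commute)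
    finally show ?thesis .
  qed
  then show ?thesis using e by simp
qed

lemma sym_transpose_eq: "sym_mat M \<Longrightarrow> transpose M = M" by (simp add: sym_mat_def)

lemma quad_sym:
  fixes M :: "real^'n^'n"
  assumes "transpose M = M" shows "x \<bullet> (M *v y) = (M *v x) \<bullet> y"
  by (metis assms dot_lmul_matrix inner_commute vector_transpose_matrix)

lemma psd_add: "psd_mat A \<Longrightarrow> psd_mat B \<Longrightarrow> psd_mat (A + B)"
  by (simp add: psd_mat_def sym_mat_def tr_add matrix_vector_mult_add_rdistrib inner_add_right add_nonneg_nonneg)

lemma pd_add_psd: "pd_mat A \<Longrightarrow> psd_mat B \<Longrightarrow> pd_mat (A + B)"
  by (simp add: pd_mat_def psd_mat_def sym_mat_def tr_add matrix_vector_mult_add_rdistrib inner_add_right add_pos_nonneg)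

lemma psd_add_pd: "psd_mat A \<Longrightarrow> pd_mat B \<Longrightarrow> pd_mat (A + B)"
  using pd_add_psd[of B A] by (simp add: add.commute)

lemma pd_psd: "pd_mat A \<Longrightarrow> psd_mat A"
  unfolding pd_mat_def psd_mat_def by (metis inner_zero_left less_le matrix_vector_mult_0_right order_refl)

lemma psd_scale: "psd_mat A \<Longrightarrow> 0 \<le> c \<Longrightarrow> psd_mat (c *\<^sub>R A)"
  by (simp add: psd_mat_def sym_mat_def transpose_scalar scaleR_matrix_vector_assoc[symmetric])

lemma pd_scale: "pd_mat A \<Longrightarrow> 0 < c \<Longrightarrow> pd_mat (c *\<^sub>R A)"
  by (simp add: pd_mat_def sym_mat_def transpose_scalar scaleR_matrix_vector_assoc[symmetric])

lemma psd_congr: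
  fixes X :: "real^'a^'b" and A :: "real^'b^'b"
  shows "psd_mat A \<Longrightarrow> psd_mat (transpose X ** A ** X)"
  unfolding psd_mat_def sym_mat_def
  by (simp add: quad_congr matrix_transpose_mul matrix_mul_assoc)

lemma pd_invertible:
  fixes M :: "real^'n^'n"
  assumes "pd_mat M" shows "invertible M"
proof -
  have "\<forall>x. M *v x = 0 \<longrightarrow> x = 0"
    using assms unfolding pd_mat_def by (metis inner_zero_right less_irrefl)
  then show ?thesis using matrix_left_invertible_ker invertible_left_inverse by blast
qed

lemma pd_inv:
  fixes M :: "real^'n^'n"
  assumes "pd_mat M" shows "pd_mat (matrix_inv M)"
proof -
  have inv: "invertible M" by (rule pd_invertible[OF assms])
  have sym: "transpose M = M" using assms by (simp add: pd_mat_def sym_mat_def)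
  have "transpose (matrix_inv M) = matrix_inv M" using inv_transpose[OF inv] sym by simp
  moreover have "0 < x \<bullet> (matrix_inv M *v x)" if "x \<noteq> 0" for x
  proof -
    let ?y = "matrix_inv M *v x"
    have xy: "x = M *v ?y" by (simp add: matrix_vector_mul_assoc inv_right[OF inv])
    have "?y \<noteq> 0" using that xy by auto
    then have "0 < ?y \<bullet> (M *v ?y)" using assms by (simp add: pd_mat_def)
    then show ?thesis using xy by (metis inner_commute)
  qed
  ultimately show ?thesis by (simp add: pd_mat_def sym_mat_def)
qed


lemma quad_ineq_zero:
  fixes a c :: real
  assumes "\<And>s. 2 * s * a \<le> s * s * c"
  shows "a = 0"
proof (rule ccontr)
  assume a: "a \<noteq> 0"
  define s where "s = a / (\<bar>c\<bar> + 1)"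
  have pos: "\<bar>c\<bar> + 1 > 0" by simp
  define d where "d = \<bar>c\<bar> + 1"
  have d: "d > 0" by (simp add: d_def)
  have "2 * s * a \<le> s * s * c" by (rule assms)
  hence h: "2 * a * a / d \<le> a * a * c / (d * d)"
    by (simp add: s_def d_def field_simps)
  have "(2 * a * a / d) * (d * d) \<le> (a * a * c / (d * d)) * (d * d)"
    by (rule mult_right_mono[OF h]) simp
  moreover have "(2 * a * a / d) * (d * d) = 2 * a * a * d" using d by (simp add: field_simps)
  moreover have "(a * a * c / (d * d)) * (d * d) = a * a * c" using d by (simp add: field_simps)
  ultimately have "(a * a) * (2 * d) \<le> (a * a) * c" by (simp add: algebra_simps)
  moreover have "a * a > 0" using a not_real_square_gt_zero by blast
  ultimately have "2 * d \<le> c" using mult_le_cancel_left_pos by blast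
  then have "2 * (\<bar>c\<bar> + 1) \<le> c" by (simp add: d_def)
  then show False by (smt (verit))
qed

lemma eig_step:
  fixes M :: "real^'n^'n" and B :: "(real^'n) set"
  assumes sym: "transpose M = M" and fin: "finite B" and card: "card B < CARD('n)"
    and orth: "\<forall>b\<in>B. \<forall>c\<in>B. b \<bullet> c = (if b = c then 1 else 0)"
    and eig: "\<forall>b\<in>B. \<exists>l. M *v b = l *\<^sub>R b"
  shows "\<exists>v. norm v = 1 \<and> (\<forall>b\<in>B. b \<bullet> v = 0) \<and> (\<exists>l. M *v v = l *\<^sub>R v)"
proof -
  define V where "V = {x::real^'n. \<forall>b\<in>B. b \<bullet> x = 0}"
  have "dim B < DIM(real^'n)" using dim_le_card'[OF fin] card by simp
  then obtain x0 :: "real^'n" where x0: "x0 \<noteq> 0" "\<And>y. y \<in> span B \<Longrightarrow> orthogonal x0 y"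
    using orthogonal_to_subspace_exists by blast
  define u where "u = x0 /\<^sub>R norm x0"
  have u1: "norm u = 1" using x0 by (simp add: u_def)
  have uV: "u \<in> V" using x0(2)[OF span_base] by (simp add: V_def u_def orthogonal_def inner_commute)
  define K where "K = sphere (0::real^'n) 1 \<inter> (\<Inter>b\<in>B. {x. b \<bullet> x = 0})"
  have K_eq: "K = {x. norm x = 1 \<and> x \<in> V}" by (auto simp: K_def V_def)
  have "compact K" unfolding K_def
    by (intro compact_Int_closed compact_sphere closed_INT ballI closed_hyperplane)
  moreover have "K \<noteq> {}" using u1 uV K_eq by auto
  moreover have "continuous_on K (\<lambda>x. x \<bullet> (M *v x))"
    by (intro continuous_intros)
  ultimately obtain v where vK: "v \<in> K" and vmax: "\<And>y. y \<in> K \<Longrightarrow> y \<bullet> (M *v y) \<le> v \<bullet> (M *v v)"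
    using continuous_attains_sup by metis
  have v1: "norm v = 1" and vV: "v \<in> V" using vK K_eq by auto
  have vv: "v \<bullet> v = 1" using v1 by (simp add: norm_eq_1)
  define l where "l = v \<bullet> (M *v v)"
  have symq: "\<And>x y. x \<bullet> (M *v y) = (M *v x) \<bullet> y" using quad_sym[OF sym] by blast
  have Vsub: "\<And>x y c. x \<in> V \<Longrightarrow> y \<in> V \<Longrightarrow> x + c *\<^sub>R y \<in> V"
    by (auto simp: V_def inner_add_right)
  have claim1: "w \<bullet> (M *v v) = 0" if wV: "w \<in> V" and wv: "w \<bullet> v = 0" for w
  proof -
    have "2 * s * (w \<bullet> (M *v v)) \<le> s * s * (l * (w \<bullet> w) - w \<bullet> (M *v w))" for s
    proof -
      define y where "y = v + s *\<^sub>R w"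
      have yV: "y \<in> V" using Vsub[OF vV wV] by (simp add: y_def add.commute)
      have yy: "y \<bullet> y = 1 + s * s * (w \<bullet> w)"
        using vv wv by (simp add: y_def inner_add_left inner_add_right inner_commute)
      have ypos: "y \<bullet> y > 0" using yy by (simp add: add_pos_nonneg)
      hence ny: "norm y > 0" by (simp add: norm_eq_sqrt_inner)
      have "(y /\<^sub>R norm y) \<in> K" using yV ny by (simp add: K_eq V_def)
      hence "(y /\<^sub>R norm y) \<bullet> (M *v (y /\<^sub>R norm y)) \<le> l"
        using vmax l_def by blast
      hence "inverse (norm y) * (inverse (norm y) * (y \<bullet> (M *v y))) \<le> l"
        by (simp add: matrix_vector_mult_scaleR)
      moreover have "inverse (norm y) * (inverse (norm y) * (y \<bullet> (M *v y))) = (y \<bullet> (M *v y)) / (norm y * norm y)"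
        by (simp add: divide_inverse mult_ac)
      ultimately have "(y \<bullet> (M *v y)) / (norm y * norm y) \<le> l" by simp
      moreover have "norm y * norm y = y \<bullet> y" by (simp add: norm_eq_sqrt_inner)
      ultimately have "y \<bullet> (M *v y) \<le> l * (y \<bullet> y)"
        using ypos by (simp add: divide_le_eq)
      moreover have "y \<bullet> (M *v y) = l + 2 * s * (w \<bullet> (M *v v)) + s * s * (w \<bullet> (M *v w))"
        using symq[of v w] by (simp add: y_def l_def matrix_vector_right_distrib matrix_vector_mult_scaleR
            inner_add_left inner_add_right inner_commute algebra_simps)
      ultimately show ?thesis using yy by (simp add: algebra_simps)
    qed
    then show ?thesis by (rule quad_ineq_zero)
  qed
  have MvV: "M *v v \<in> V"
  proof -
    have "b \<bullet> (M *v v) = 0" if bB: "b \<in> B" for b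
    proof -
      obtain lb where lb: "M *v b = lb *\<^sub>R b" using bspec[OF eig bB] by (rule exE)
      have "b \<bullet> (M *v v) = (M *v b) \<bullet> v" by (rule symq)
      also have "\<dots> = lb * (b \<bullet> v)" by (simp add: lb)
      also have "b \<bullet> v = 0" using vV bB by (simp add: V_def)
      finally show ?thesis by simp
    qed
    then show ?thesis by (simp add: V_def)
  qed
  define w where "w = M *v v - l *\<^sub>R v"
  have wV: "w \<in> V" using Vsub[OF MvV vV, of "-l"] by (simp add: w_def)
  have wv: "w \<bullet> v = 0"
  proof -
    have "w \<bullet> v = (M *v v) \<bullet> v - l * (v \<bullet> v)" by (simp add: w_def inner_diff_left)
    also have "(M *v v) \<bullet> v = l" by (simp add: l_def inner_commute)
    finally show ?thesis using vv by simp
  qed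
  have "w \<bullet> w = 0"
    using claim1[OF wV wv] wv by (simp add: w_def inner_diff_right)
  hence "M *v v = l *\<^sub>R v" by (simp add: w_def)
  moreover have "\<forall>b\<in>B. b \<bullet> v = 0" using vV by (simp add: V_def)
  ultimately show ?thesis using v1 by blast
qed


definition ONE :: "(real^'n) set \<Rightarrow> (real^'n^'n) \<Rightarrow> bool" where
  "ONE B M \<longleftrightarrow> finite B \<and> (\<forall>b\<in>B. \<forall>c\<in>B. b \<bullet> c = (if b = c then 1 else 0))
      \<and> (\<forall>b\<in>B. \<exists>l. M *v b = l *\<^sub>R b)"

lemma eig_basis_k:
  fixes M :: "real^'n^'n"
  assumes sym: "transpose M = M"
  shows "k \<le> CARD('n) \<Longrightarrow> \<exists>B. ONE B M \<and> card B = k"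
proof (induction k)
  case 0
  show ?case by (auto simp: ONE_def intro!: exI[of _ "{}"])
next
  case (Suc k)
  then obtain B where B: "ONE B M" "card B = k" by auto
  have "card B < CARD('n)" using Suc.prems B by simp
  then obtain v where v: "norm v = 1" "\<forall>b\<in>B. b \<bullet> v = 0" "\<exists>l. M *v v = l *\<^sub>R v"
    using eig_step[OF sym, of B] B(1) unfolding ONE_def by blast
  have vv: "v \<bullet> v = 1" using v(1) by (simp add: norm_eq_1)
  have vB: "v \<notin> B" using v(2) vv by auto
  have "ONE (insert v B) M"
    using B(1) v vv vB unfolding ONE_def by (auto simp: inner_commute)
  moreover have "card (insert v B) = Suc k" using B vB unfolding ONE_def by simp
  ultimately show ?case by blast
qed

lemma ONE_full_zero:
  fixes M :: "real^'n^'n"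
  assumes "ONE B M" "card B = CARD('n)" "\<forall>b\<in>B. b \<bullet> y = 0"
  shows "y = 0"
proof (rule ccontr)
  assume y: "y \<noteq> 0"
  define u where "u = y /\<^sub>R norm y"
  have "norm u = 1" using y by (simp add: u_def)
  hence uu: "u \<bullet> u = 1" using norm_eq_1 by blast
  have ub: "\<forall>b\<in>B. b \<bullet> u = 0" using assms(3) by (simp add: u_def)
  have uB: "u \<notin> B" using ub uu by auto
  let ?C = "insert u B"
  have fin: "finite B" using assms(1) by (simp add: ONE_def)
  have "pairwise orthogonal ?C"
    using assms(1) ub unfolding ONE_def pairwise_def orthogonal_def by (auto simp: inner_commute)
  moreover have "0 \<notin> ?C" using assms(1) uu unfolding ONE_def by (auto) (metis inner_zero_left zero_neq_one)
  ultimately have "independent ?C" by (rule pairwise_orthogonal_independent)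
  hence "card ?C \<le> DIM(real^'n)" using independent_bound by blast
  moreover have "card ?C = Suc (CARD('n))" using fin uB assms(2) by simp
  ultimately show False by simp
qed

lemma ONE_expand:
  fixes M :: "real^'n^'n"
  assumes "ONE B M" "card B = CARD('n)"
  shows "x = (\<Sum>b\<in>B. (b \<bullet> x) *\<^sub>R b)"
proof -
  have fin: "finite B" and orth: "\<forall>b\<in>B. \<forall>c\<in>B. b \<bullet> c = (if b = c then 1 else 0)"
    using assms(1) by (auto simp: ONE_def)
  have "c \<bullet> (x - (\<Sum>b\<in>B. (b \<bullet> x) *\<^sub>R b)) = 0" if c: "c \<in> B" for c
  proof -
    have "c \<bullet> (\<Sum>b\<in>B. (b \<bullet> x) *\<^sub>R b) = (\<Sum>b\<in>B. (b \<bullet> x) * (c \<bullet> b))"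
      by (simp add: inner_sum_right)
    also have "\<dots> = (\<Sum>b\<in>B. if b = c then c \<bullet> x else 0)"
      using orth c by (intro sum.cong) auto
    also have "\<dots> = c \<bullet> x" using fin c by simp
    finally show ?thesis by (simp add: inner_diff_right)
  qed
  then have "x - (\<Sum>b\<in>B. (b \<bullet> x) *\<^sub>R b) = 0" by (intro ONE_full_zero[OF assms]) auto
  then show ?thesis by simp
qed

definition outer :: "real^'n \<Rightarrow> real^'n^'n" where
  "outer u = (\<chi> i j. u$i * u$j)"

lemma outer_mv: "outer u *v x = (u \<bullet> x) *\<^sub>R u"
  by (simp add: outer_def matrix_vector_mult_def inner_vec_def vec_eq_iff sum_distrib_left
      sum_distrib_right mult_ac)

lemma sum_mv: "(\<Sum>b\<in>B. f b :: real^'n^'n) *v x = (\<Sum>b\<in>B. f b *v x)"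
  by (induction B rule: infinite_finite_induct) (auto simp: matrix_vector_mult_add_rdistrib)

lemma sum_transpose: "transpose (\<Sum>b\<in>B. f b :: real^'n^'n) = (\<Sum>b\<in>B. transpose (f b))"
  by (induction B rule: infinite_finite_induct) (auto simp: tr_add tr_zero)

lemma mv_sum: "(A :: real^'n^'n) *v (\<Sum>b\<in>B. f b) = (\<Sum>b\<in>B. A *v f b)"
  by (induction B rule: infinite_finite_induct) (auto simp: matrix_vector_right_distrib)

lemma psd_sqrt_exists:
  fixes M :: "real^'n^'n"
  assumes "psd_mat M"
  shows "\<exists>H. psd_mat H \<and> H ** H = M \<and> (\<forall>K. psd_mat K \<and> K ** K = M \<longrightarrow> K = H)"
proof -
  have sym: "transpose M = M" using assms by (simp add: psd_mat_def sym_mat_def)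
  obtain B where B: "ONE B M" "card B = CARD('n)" using eig_basis_k[OF sym, of "CARD('n)"] by auto
  have fin: "finite B" and orth: "\<forall>b\<in>B. \<forall>c\<in>B. b \<bullet> c = (if b = c then 1 else 0)"
    and eig: "\<forall>b\<in>B. \<exists>l. M *v b = l *\<^sub>R b" using B(1) by (auto simp: ONE_def)
  define lam where "lam b = b \<bullet> (M *v b)" for b
  have Mb: "M *v b = lam b *\<^sub>R b" if bB: "b \<in> B" for b
  proof -
    obtain l where l: "M *v b = l *\<^sub>R b" using bspec[OF eig bB] by (rule exE)
    have bb: "b \<bullet> b = 1" using orth bB by auto
    have "lam b = l" using bb by (simp add: lam_def l)
    then show ?thesis using l by simp
  qed
  have lam_nn: "lam b \<ge> 0" for b using assms by (simp add: lam_def psd_mat_def)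
  define H where "H = (\<Sum>b\<in>B. sqrt (lam b) *\<^sub>R outer b)"
  have Hx: "H *v x = (\<Sum>b\<in>B. (sqrt (lam b) * (b \<bullet> x)) *\<^sub>R b)" for x
    by (simp add: H_def sum_mv outer_mv scaleR_matrix_vector_assoc[symmetric])
  have Hb: "H *v c = sqrt (lam c) *\<^sub>R c" if c: "c \<in> B" for c
  proof -
    have "H *v c = (\<Sum>b\<in>B. if b = c then sqrt (lam c) *\<^sub>R c else 0)"
      unfolding Hx using orth c by (intro sum.cong) auto
    also have "\<dots> = sqrt (lam c) *\<^sub>R c" using fin c by simp
    finally show ?thesis .
  qed
  have eqB: "K1 = K2" if "\<And>b. b \<in> B \<Longrightarrow> K1 *v b = K2 *v b" for K1 K2 :: "real^'n^'n"
  proof -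
    have "K1 *v x = K2 *v x" for x
    proof -
      have "K1 *v x = K1 *v (\<Sum>b\<in>B. (b \<bullet> x) *\<^sub>R b)" using ONE_expand[OF B] by metis
      also have "\<dots> = (\<Sum>b\<in>B. (b \<bullet> x) *\<^sub>R (K1 *v b))" by (simp add: mv_sum matrix_vector_mult_scaleR)
      also have "\<dots> = (\<Sum>b\<in>B. (b \<bullet> x) *\<^sub>R (K2 *v b))" using that by simp
      also have "\<dots> = K2 *v (\<Sum>b\<in>B. (b \<bullet> x) *\<^sub>R b)" by (simp add: mv_sum matrix_vector_mult_scaleR)
      also have "\<dots> = K2 *v x" using ONE_expand[OF B] by metis
      finally show ?thesis .
    qed
    then show ?thesis by (simp add: matrix_eq)
  qed
  have Hsym: "transpose H = H"
  proof -
    have "transpose (outer b) = outer b" for b :: "real^'n"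
      by (simp add: outer_def transpose_def vec_eq_iff mult.commute)
    then show ?thesis unfolding H_def by (simp add: sum_transpose transpose_scalar)
  qed
  have Hpsd: "psd_mat H"
  proof -
    have "0 \<le> x \<bullet> (H *v x)" for x
      unfolding Hx by (simp add: inner_sum_right inner_commute mult.assoc[symmetric])
        (intro sum_nonneg, metis mult.assoc mult_nonneg_nonneg real_sqrt_ge_zero lam_nn zero_le_square)
    then show ?thesis using Hsym by (simp add: psd_mat_def sym_mat_def)
  qed
  have HH: "H ** H = M"
    by (rule eqB) (simp add: matrix_vector_mul_assoc[symmetric] Hb Mb matrix_vector_mult_scaleR lam_nn)
  have uniq: "K = H" if K: "psd_mat K" "K ** K = M" for K
  proof (rule eqB)
    fix b assume b: "b \<in> B"
    have Ksym: "transpose K = K" using K by (simp add: psd_mat_def sym_mat_def)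
    have KKb: "K *v (K *v b) = lam b *\<^sub>R b" using K(2) Mb[OF b] by (simp add: matrix_vector_mul_assoc)
    have "K *v b = sqrt (lam b) *\<^sub>R b"
    proof (cases "lam b = 0")
      case True
      have "(K *v b) \<bullet> (K *v b) = b \<bullet> (K *v (K *v b))" using quad_sym[OF Ksym] by metis
      also have "\<dots> = 0" using KKb True by simp
      finally show ?thesis using True by simp
    next
      case False
      define s where "s = sqrt (lam b)"
      have s: "s > 0" using False lam_nn[of b] by (simp add: s_def)
      have ss: "s * s = lam b" using lam_nn[of b] by (simp add: s_def)
      define y where "y = K *v b - s *\<^sub>R b"
      have "K *v y + s *\<^sub>R y = 0"
        using KKb ss by (simp add: y_def matrix_vector_mult_diff_distrib matrix_vector_mult_scaleR algebra_simps)
      hence "y \<bullet> (K *v y) + s * (y \<bullet> y) = 0"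
        by (metis inner_add_right inner_scaleR_right inner_zero_right)
      moreover have "y \<bullet> (K *v y) \<ge> 0" using K by (simp add: psd_mat_def)
      moreover have "y \<bullet> y \<ge> 0" by simp
      moreover have "s * (y \<bullet> y) \<ge> 0" using s by simp
      ultimately have "s * (y \<bullet> y) = 0" by linarith
      hence "y = 0" using s by simp
      then show ?thesis by (simp add: y_def s_def)
    qed
    then show "K *v b = H *v b" using Hb[OF b] by simp
  qed
  show ?thesis using Hpsd HH uniq by blast
qed

lemma psd_sqrt:
  fixes M :: "real^'n^'n"
  assumes "psd_mat M"
  shows "psd_mat (psd_sqrt M)" "psd_sqrt M ** psd_sqrt M = M"
proof -
  obtain H where H: "psd_mat H" "H ** H = M" "\<forall>K. psd_mat K \<and> K ** K = M \<longrightarrow> K = H"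
    using psd_sqrt_exists[OF assms] by blast
  have "psd_sqrt M = H" unfolding psd_sqrt_def
  proof (rule the_equality)
    show "psd_mat H \<and> H ** H = M" using H by blast
  next
    fix K assume "psd_mat K \<and> K ** K = M" then show "K = H" using H(3) by blast
  qed
  then show "psd_mat (psd_sqrt M)" "psd_sqrt M ** psd_sqrt M = M" using H(1,2) by simp_all
qed


abbreviation "X01 \<equiv> {0..1::real}"

definition md :: "(real \<Rightarrow> real^'a^'b) \<Rightarrow> real^'a^'b \<Rightarrow> bool" where
  "md f D \<longleftrightarrow> (\<forall>i j. ((\<lambda>t. f t $ i $ j) has_real_derivative D $ i $ j) (at 0 within X01))"

lemma mdD: "md f D \<Longrightarrow> ((\<lambda>t. f t $ i $ j) has_real_derivative D $ i $ j) (at 0 within X01)"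
  by (simp add: md_def)

lemma md_const: "md (\<lambda>t. C) 0"
  by (simp add: md_def)

lemma md_line: "md (\<lambda>t. A + t *\<^sub>R D) D"
  unfolding md_def by (auto intro!: derivative_eq_intros)

lemma md_add: "md f F \<Longrightarrow> md g G \<Longrightarrow> md (\<lambda>t. f t + g t) (F + G)"
  unfolding md_def by (auto intro!: derivative_eq_intros)

lemma md_diff: "md f F \<Longrightarrow> md g G \<Longrightarrow> md (\<lambda>t. f t - g t) (F - G)"
  unfolding md_def by (auto intro!: derivative_eq_intros)

lemma md_neg: "md f F \<Longrightarrow> md (\<lambda>t. - f t) (- F)"
  unfolding md_def by (auto intro!: derivative_eq_intros)

lemma md_scale: "md f F \<Longrightarrow> md (\<lambda>t. c *\<^sub>R f t) (c *\<^sub>R F)"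
  unfolding md_def by (auto intro!: derivative_eq_intros)

lemma md_transpose: "md f F \<Longrightarrow> md (\<lambda>t. transpose (f t)) (transpose F)"
  unfolding md_def by (simp add: transpose_def)

lemma md_mult:
  fixes f :: "real \<Rightarrow> real^'a^'b" and g :: "real \<Rightarrow> real^'c^'a"
  assumes "md f F" "md g G"
  shows "md (\<lambda>t. f t ** g t) (F ** g 0 + f 0 ** G)"
  unfolding md_def
proof (intro allI)
  fix i j
  have "((\<lambda>t. \<Sum>k\<in>UNIV. f t $ i $ k * g t $ k $ j) has_real_derivative
        (\<Sum>k\<in>UNIV. F $ i $ k * g 0 $ k $ j + G $ k $ j * f 0 $ i $ k)) (at 0 within X01)"
    by (intro DERIV_sum DERIV_mult mdD[OF assms(1)] mdD[OF assms(2)])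
  then show "((\<lambda>t. (f t ** g t) $ i $ j) has_real_derivative (F ** g 0 + f 0 ** G) $ i $ j) (at 0 within X01)"
    by (simp add: matrix_matrix_mult_def sum.distrib mult.commute)
qed

lemma md_cong:
  assumes "md f D" "\<And>t. t \<in> X01 \<Longrightarrow> f t = g t"
  shows "md g D"
  unfolding md_def
proof (intro allI)
  fix i j
  show "((\<lambda>t. g t $ i $ j) has_real_derivative D $ i $ j) (at 0 within X01)"
    by (rule has_field_derivative_transform_within[OF mdD[OF assms(1)], of 1]) (auto simp: assms(2))
qed

lemma md_cont: "md f F \<Longrightarrow> ((\<lambda>t. f t $ i $ j) \<longlongrightarrow> f 0 $ i $ j) (at 0 within X01)"
  using DERIV_continuous[OF mdD] by (simp add: continuous_within)

lemma trace_deriv: "md f F \<Longrightarrow> ((\<lambda>t. trace (f t)) has_real_derivative trace F) (at 0 within X01)"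
  unfolding trace_def by (intro DERIV_sum mdD)

lemma det_tendsto:
  fixes f :: "real \<Rightarrow> real^'n^'n"
  assumes "\<And>i j. ((\<lambda>t. f t $ i $ j) \<longlongrightarrow> f 0 $ i $ j) (at 0 within X01)"
  shows "((\<lambda>t. det (f t)) \<longlongrightarrow> det (f 0)) (at 0 within X01)"
  unfolding det_def by (intro tendsto_intros assms)

lemma mv_axis: "((M::real^'n^'m) *v axis j 1) $ k = M $ k $ j"
  by (simp add: matrix_vector_mult_def axis_def if_distrib cong: if_cong)

lemma inv_entry:
  fixes A :: "real^'n^'n"
  assumes "invertible A"
  shows "matrix_inv A $ k $ j = det (\<chi> i l. if l = k then axis j 1 $ i else A $ i $ l) / det A"
proof -
  have d: "det A \<noteq> 0" using assms invertible_det_nz by blast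
  have "A *v (matrix_inv A *v axis j 1) = axis j 1"
    by (simp add: matrix_vector_mul_assoc inv_right[OF assms])
  then have "matrix_inv A *v axis j 1 = (\<chi> k. det (\<chi> i l. if l = k then axis j 1 $ i else A $ i $ l) / det A)"
    using cramer[OF d] by blast
  then have "(matrix_inv A *v axis j 1) $ k = det (\<chi> i l. if l = k then axis j 1 $ i else A $ i $ l) / det A"
    by simp
  then show ?thesis by (simp only: mv_axis)
qed

lemma tendsto_X01_cong:
  assumes "(f \<longlongrightarrow> l) (at 0 within X01)" "\<And>t. t \<in> X01 \<Longrightarrow> t \<noteq> 0 \<Longrightarrow> f t = g t"
  shows "(g \<longlongrightarrow> l) (at 0 within X01)"
proof -
  have "eventually (\<lambda>t. f t = g t) (at 0 within X01)"
    unfolding eventually_at using assms(2) by (intro exI[of _ 1]) auto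
  then show ?thesis using assms(1) tendsto_cong by blast
qed

lemma inv_tendsto:
  fixes f :: "real \<Rightarrow> real^'n^'n"
  assumes "\<And>i j. ((\<lambda>t. f t $ i $ j) \<longlongrightarrow> f 0 $ i $ j) (at 0 within X01)"
    and inv: "\<And>t. t \<in> X01 \<Longrightarrow> invertible (f t)"
  shows "((\<lambda>t. matrix_inv (f t) $ k $ j) \<longlongrightarrow> matrix_inv (f 0) $ k $ j) (at 0 within X01)"
proof -
  define g where "g t = (\<chi> i l. if l = k then axis j 1 $ i else f t $ i $ l)" for t
  have gt: "((\<lambda>t. g t $ i $ l) \<longlongrightarrow> g 0 $ i $ l) (at 0 within X01)" for i l
    by (simp add: g_def assms(1))
  have d0: "det (f 0) \<noteq> 0" using inv[of 0] invertible_det_nz by auto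
  have "((\<lambda>t. det (g t) / det (f t)) \<longlongrightarrow> det (g 0) / det (f 0)) (at 0 within X01)"
    by (intro tendsto_divide det_tendsto gt assms(1) d0)
  moreover have "det (g 0) / det (f 0) = matrix_inv (f 0) $ k $ j"
    using inv_entry[OF inv[of 0]] by (simp add: g_def)
  ultimately have "((\<lambda>t. det (g t) / det (f t)) \<longlongrightarrow> matrix_inv (f 0) $ k $ j) (at 0 within X01)"
    by simp
  then show ?thesis
    by (rule tendsto_X01_cong) (simp add: inv_entry[OF inv] g_def)
qed

lemma md_inv:
  fixes f :: "real \<Rightarrow> real^'n^'n"
  assumes md: "md f F" and inv: "\<And>t. t \<in> X01 \<Longrightarrow> invertible (f t)"
  shows "md (\<lambda>t. matrix_inv (f t)) (- (matrix_inv (f 0) ** F ** matrix_inv (f 0)))"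
  unfolding md_def
proof (intro allI)
  fix i j
  define N where "N t = matrix_inv (f t)" for t
  have Nt: "((\<lambda>t. N t $ a $ b) \<longlongrightarrow> N 0 $ a $ b) (at 0 within X01)" for a b
    unfolding N_def by (rule inv_tendsto[OF md_cont[OF md] inv])
  have Fq: "((\<lambda>t. (f t $ a $ b - f 0 $ a $ b) / (t - 0)) \<longlongrightarrow> F $ a $ b) (at 0 within X01)" for a b
    using mdD[OF md, of a b] unfolding has_field_derivative_iff by simp
  have key: "(N t $ i $ j - N 0 $ i $ j) / (t - 0) =
     - (\<Sum>a\<in>UNIV. \<Sum>b\<in>UNIV. N t $ i $ a * ((f t $ a $ b - f 0 $ a $ b) / (t - 0)) * N 0 $ b $ j)"
    if t: "t \<in> X01" for t
  proof -
    have "N t - N 0 = N t ** (f 0 - f t) ** N 0"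
    proof -
      have "N t ** (f 0 - f t) ** N 0 = N t ** f 0 ** N 0 - N t ** f t ** N 0"
        by (simp add: mm_diff_l mm_diff_r)
      also have "N t ** f t = mat 1" using inv_left[OF inv[OF t]] by (simp add: N_def)
      also have "N t ** f 0 ** N 0 = N t" using inv_right[OF inv[of 0]]
        by (simp add: N_def matrix_mul_assoc[symmetric])
      finally show ?thesis by simp
    qed
    then have "N t $ i $ j - N 0 $ i $ j = (N t ** (f 0 - f t) ** N 0) $ i $ j" by (metis vector_minus_component)
    also have "\<dots> = (\<Sum>b\<in>UNIV. \<Sum>a\<in>UNIV. N t $ i $ a * (f 0 $ a $ b - f t $ a $ b) * N 0 $ b $ j)"
      by (simp add: matrix_matrix_mult_def sum_distrib_right)
    also have "\<dots> = (\<Sum>a\<in>UNIV. \<Sum>b\<in>UNIV. N t $ i $ a * (f 0 $ a $ b - f t $ a $ b) * N 0 $ b $ j)"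
      by (rule sum.swap)
    also have "\<dots> = - (\<Sum>a\<in>UNIV. \<Sum>b\<in>UNIV. N t $ i $ a * (f t $ a $ b - f 0 $ a $ b) * N 0 $ b $ j)"
      by (simp add: sum_negf[symmetric] algebra_simps)
    finally show ?thesis by (simp add: sum_divide_distrib)
  qed
  have "((\<lambda>t. - (\<Sum>a\<in>UNIV. \<Sum>b\<in>UNIV. N t $ i $ a * ((f t $ a $ b - f 0 $ a $ b) / (t - 0)) * N 0 $ b $ j))
      \<longlongrightarrow> - (\<Sum>a\<in>UNIV. \<Sum>b\<in>UNIV. N 0 $ i $ a * F $ a $ b * N 0 $ b $ j)) (at 0 within X01)"
    by (intro tendsto_intros Nt Fq)
  then have "((\<lambda>t. (N t $ i $ j - N 0 $ i $ j) / (t - 0))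
      \<longlongrightarrow> - (\<Sum>a\<in>UNIV. \<Sum>b\<in>UNIV. N 0 $ i $ a * F $ a $ b * N 0 $ b $ j)) (at 0 within X01)"
    by (rule tendsto_X01_cong) (rule key[symmetric], assumption)
  moreover have "(\<Sum>a\<in>UNIV. \<Sum>b\<in>UNIV. N 0 $ i $ a * F $ a $ b * N 0 $ b $ j) = (N 0 ** F ** N 0) $ i $ j"
    by (simp add: matrix_matrix_mult_def sum_distrib_right) (rule sum.swap)
  ultimately show "((\<lambda>t. matrix_inv (f t) $ i $ j) has_real_derivative (- (matrix_inv (f 0) ** F ** matrix_inv (f 0))) $ i $ j) (at 0 within X01)"
    unfolding has_field_derivative_iff by (simp add: N_def)
qed


lemma DERIV_prod_within:
  assumes "finite A" "\<And>x. x \<in> A \<Longrightarrow> (f x has_field_derivative f' x) (at z within S)"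
  shows "((\<lambda>u. \<Prod>x\<in>A. f x u) has_field_derivative (\<Sum>x\<in>A. f' x * (\<Prod>y\<in>A-{x}. f y z))) (at z within S)"
  using assms
proof (induction A rule: finite_induct)
  case empty
  then show ?case by simp
next
  case (insert x A)
  have eq: "insert x A - {y} = insert x (A - {y})" if "y \<in> A" for y
    using insert.hyps that by auto
  have IH: "((\<lambda>u. \<Prod>x\<in>A. f x u) has_field_derivative (\<Sum>x\<in>A. f' x * (\<Prod>y\<in>A-{x}. f y z))) (at z within S)"
    using insert by auto
  have fx: "(f x has_field_derivative f' x) (at z within S)" using insert by auto
  have "((\<lambda>u. f x u * (\<Prod>x\<in>A. f x u)) has_field_derivative
          f' x * (\<Prod>x\<in>A. f x z) + (\<Sum>x\<in>A. f' x * (\<Prod>y\<in>A-{x}. f y z)) * f x z) (at z within S)"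
    by (rule DERIV_mult[OF fx IH])
  moreover have "f' x * (\<Prod>x\<in>A. f x z) + (\<Sum>x\<in>A. f' x * (\<Prod>y\<in>A-{x}. f y z)) * f x z
      = (\<Sum>y\<in>insert x A. f' y * (\<Prod>w\<in>insert x A - {y}. f w z))"
  proof -
    have "(\<Sum>y\<in>insert x A. f' y * (\<Prod>w\<in>insert x A - {y}. f w z))
        = f' x * (\<Prod>w\<in>A. f w z) + (\<Sum>y\<in>A. f' y * (\<Prod>w\<in>insert x A - {y}. f w z))"
      using insert.hyps by (simp add: sum.insert)
    also have "(\<Sum>y\<in>A. f' y * (\<Prod>w\<in>insert x A - {y}. f w z)) = (\<Sum>y\<in>A. f' y * (f x z * (\<Prod>w\<in>A - {y}. f w z)))"
      using insert.hyps by (intro sum.cong refl) (simp add: eq)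
    finally show ?thesis by (simp add: sum_distrib_left sum_distrib_right mult_ac)
  qed
  ultimately show ?case using insert.hyps by simp
qed

lemma perm_fix_all_but_one:
  assumes p: "p permutes (UNIV :: 'n set)" and hfix: "\<And>j. j \<noteq> i \<Longrightarrow> p j = j"
  shows "p = id"
proof -
  have "p i = i"
  proof (rule ccontr)
    assume ne: "p i \<noteq> i"
    have "p (p i) = p i" using hfix[OF ne] .
    hence "p i = i" using permutes_inj[OF p] by (metis injD)
    with ne show False by simp
  qed
  show ?thesis
  proof (rule ext)
    fix x show "p x = id x" using \<open>p i = i\<close> hfix by (cases "x = i") auto
  qed
qed

lemma det_deriv_id:
  fixes g :: "real \<Rightarrow> real^'n^'n"
  assumes md: "md g G" and g0: "g 0 = mat 1"
  shows "((\<lambda>t. det (g t)) has_real_derivative trace G) (at 0 within X01)"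
proof -
  let ?P = "{p. p permutes (UNIV :: 'n set)}"
  define T where "T p = (\<Sum>i\<in>UNIV. G $ i $ p i * (\<Prod>j\<in>UNIV-{i}. g 0 $ j $ p j))" for p :: "'n \<Rightarrow> 'n"
  have "((\<lambda>t. \<Sum>p\<in>?P. of_int (sign p) * (\<Prod>i\<in>UNIV. g t $ i $ p i)) has_real_derivative
         (\<Sum>p\<in>?P. of_int (sign p) * T p)) (at 0 within X01)"
    unfolding T_def by (intro DERIV_sum DERIV_cmult DERIV_prod_within finite mdD[OF md])
  moreover have "(\<Sum>p\<in>?P. of_int (sign p) * T p) = trace G"
  proof -
    have "(\<Sum>p\<in>?P. of_int (sign p) * T p) = (\<Sum>p\<in>?P. if p = id then trace G else 0)"
    proof (intro sum.cong refl)
      fix p assume "p \<in> ?P"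
      hence p: "p permutes (UNIV :: 'n set)" by simp
      show "of_int (sign p) * T p = (if p = id then trace G else 0)"
      proof (cases "p = id")
        case True
        then show ?thesis by (simp add: T_def g0 sign_id trace_def mat_def)
      next
        case False
        have z: "(\<Prod>j\<in>UNIV-{i}. g 0 $ j $ p j) = 0" for i
        proof -
          obtain j where "j \<noteq> i" "p j \<noteq> j" using perm_fix_all_but_one[OF p, of i] False by blast
          then show ?thesis by (intro prod_zero) (auto simp: g0 mat_def intro!: bexI[of _ j])
        qed
        have "T p = 0" unfolding T_def by (simp only: z mult_zero_right sum.neutral_const)
        then show ?thesis using False by simp
      qed
    qed
    also have "\<dots> = trace G" by (simp add: permutes_id)
    finally show ?thesis .
  qed
  ultimately show ?thesis by (simp add: det_def)
qed

lemma lndet_deriv: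
  fixes f :: "real \<Rightarrow> real^'n^'n"
  assumes md: "md f F" and pos: "det (f 0) > 0"
  shows "((\<lambda>t. ln (det (f t))) has_real_derivative trace (matrix_inv (f 0) ** F)) (at 0 within X01)"
proof -
  have inv: "invertible (f 0)" using pos invertible_det_nz by force
  define N where "N = matrix_inv (f 0)"
  define g where "g = (\<lambda>t. N ** f t)"
  have mdg: "md g (N ** F)"
    using md_mult[OF md_const[of N] md] by (simp add: g_def)
  have g0: "g 0 = mat 1" using inv_left[OF inv] by (simp add: g_def N_def)
  have fg: "det (f t) = det (f 0) * det (g t)" for t
  proof -
    have "f 0 ** g t = f t" using inv_right[OF inv] by (simp add: g_def N_def matrix_mul_assoc)
    then show ?thesis by (metis det_mul)
  qed
  have d: "((\<lambda>t. det (f 0) * det (g t)) has_real_derivative det (f 0) * trace (N ** F)) (at 0 within X01)"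
    by (intro DERIV_cmult det_deriv_id[OF mdg g0])
  have D: "((\<lambda>t. ln (det (f 0) * det (g t))) has_real_derivative inverse (det (f 0) * det (g 0)) * (det (f 0) * trace (N ** F))) (at 0 within X01)"
    by (rule DERIV_chain2[OF DERIV_ln d]) (simp add: g0 pos)
  have eq: "inverse (det (f 0) * det (g 0)) * (det (f 0) * trace (N ** F)) = trace (N ** F)"
    using pos by (simp add: g0)
  have ff: "(\<lambda>t. ln (det (f 0) * det (g t))) = (\<lambda>t. ln (det (f t)))"
  proof (rule ext)
    fix t show "ln (det (f 0) * det (g t)) = ln (det (f t))" by (simp only: fg[of t])
  qed
  from D have "((\<lambda>t. ln (det (f 0) * det (g t))) has_real_derivative trace (N ** F)) (at 0 within X01)"
    by (simp only: eq)
  then show ?thesis by (simp only: ff N_def)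
qed

lemma pd_mat_one: "pd_mat (mat 1 :: real^'n^'n)"
  by (simp add: pd_mat_def sym_mat_def)

lemma pd_det_pos:
  fixes M :: "real^'n^'n"
  assumes pd: "pd_mat M"
  shows "det M > 0"
proof (rule ccontr)
  assume "\<not> det M > 0"
  hence neg: "det M \<le> 0" by simp
  define h where "h s = det ((1 - s) *\<^sub>R mat 1 + s *\<^sub>R M)" for s :: real
  have "continuous_on {0..1} h"
    unfolding h_def det_def by (intro continuous_intros) 
  moreover have "h 1 \<le> 0" using neg by (simp add: h_def)
  moreover have "0 \<le> h 0" by (simp add: h_def)
  ultimately obtain s where s: "0 \<le> s" "s \<le> 1" "h s = 0"
    using IVT2'[of h 1 0 0] by auto
  have "pd_mat ((1 - s) *\<^sub>R mat 1 + s *\<^sub>R M)"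
  proof (cases "s = 1")
    case True then show ?thesis using pd by simp
  next
    case False
    then have "pd_mat ((1 - s) *\<^sub>R (mat 1 :: real^'n^'n))" using s by (intro pd_scale pd_mat_one) auto
    moreover have "psd_mat (s *\<^sub>R M)" using s pd by (intro psd_scale pd_psd) auto
    ultimately show ?thesis by (rule pd_add_psd)
  qed
  then have "invertible ((1 - s) *\<^sub>R mat 1 + s *\<^sub>R M)" by (rule pd_invertible)
  then have "h s \<noteq> 0" unfolding h_def using invertible_det_nz by blast
  with s show False by simp
qed


lemma mm_assoc3: "(A::real^'a^'b) ** (B::real^'c^'a) ** (C::real^'d^'c) = A ** (B ** C)"
  by (simp add: matrix_mul_assoc)

lemma sym_psd: "psd_mat M \<Longrightarrow> transpose M = M" by (simp add: psd_mat_def sym_mat_def)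
lemma sym_pd: "pd_mat M \<Longrightarrow> transpose M = M" by (simp add: pd_mat_def sym_mat_def)

lemma sig_pi_formula:
  fixes Bk :: "real^'m^'n" and Rk S :: "real^'m^'m" and P :: "real^'n^'n"
  assumes eps: "eps > 0" and S: "psd_mat S" and P: "psd_mat P" and R: "pd_mat Rk"
  defines "G \<equiv> Rk + transpose Bk ** P ** Bk"
  defines "SQ \<equiv> eps *\<^sub>R matrix_inv G"
  defines "L \<equiv> matrix_inv (SQ + S)"
  shows "Sig_pi_step eps Bk Rk S P = SQ - SQ ** L ** SQ"
proof -
  have Gpd: "pd_mat G" unfolding G_def using R psd_congr[OF P, of Bk] by (rule pd_add_psd)
  have Ginv: "invertible G" by (rule pd_invertible[OF Gpd])
  have SQpd: "pd_mat SQ" unfolding SQ_def using pd_inv[OF Gpd] eps by (rule pd_scale)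
  have Npd: "pd_mat (SQ + S)" using SQpd S by (rule pd_add_psd)
  have Ninv: "invertible (SQ + S)" by (rule pd_invertible[OF Npd])
  define H where "H = psd_sqrt S"
  have Hpsd: "psd_mat H" and HH: "H ** H = S" using psd_sqrt[OF S] by (auto simp: H_def)
  have Hsym: "transpose H = H" using Hpsd by (rule sym_psd)
  define C where "C = Cmat eps Bk Rk P"
  have C: "C = (1/eps) *\<^sub>R G" by (simp add: C_def Cmat_def G_def)
  have CSQ: "C ** SQ = mat 1" using eps by (simp add: C SQ_def mm_scale_l mm_scale_r inv_right[OF Ginv])
  have Cpsd: "psd_mat C" unfolding C using pd_psd[OF Gpd] eps by (intro psd_scale) auto
  define Z where "Z = mat 1 + H ** C ** H"
  have Zpd: "pd_mat Z" unfolding Z_def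
    using pd_mat_one psd_congr[OF Cpsd, of H] Hsym by (intro pd_add_psd) auto
  have Zinv: "invertible Z" by (rule pd_invertible[OF Zpd])
  have LN: "L ** (SQ + S) = mat 1" unfolding L_def by (rule inv_left[OF Ninv])
  have NL: "(SQ + S) ** L = mat 1" unfolding L_def by (rule inv_right[OF Ninv])
  have "Z ** (H ** L ** SQ) = H"
  proof -
    have "Z ** (H ** L ** SQ) = H ** (mat 1 + C ** S) ** L ** SQ"
      by (simp add: Z_def mm_simps matrix_mul_assoc HH[symmetric])
    also have "mat 1 + C ** S = C ** (SQ + S)" by (simp add: matrix_add_ldistrib CSQ)
    also have "H ** (C ** (SQ + S)) ** L ** SQ = H ** C ** ((SQ + S) ** L) ** SQ"
      by (simp add: matrix_mul_assoc)
    also have "\<dots> = H" by (simp add: NL CSQ matrix_mul_assoc[symmetric])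
    finally show ?thesis .
  qed
  then have ZH: "matrix_inv Z ** H = H ** L ** SQ"
    by (metis inv_left[OF Zinv] matrix_mul_assoc matrix_mul_lid)
  have "Sig_pi_step eps Bk Rk S P = H ** (matrix_inv Z ** H)"
    by (simp add: Sig_pi_step_def H_def[symmetric] C_def[symmetric] Z_def[symmetric] matrix_mul_assoc)
  also have "\<dots> = S ** L ** SQ" by (simp add: ZH matrix_mul_assoc HH)
  also have "S ** L ** SQ = (SQ + S) ** L ** SQ - SQ ** L ** SQ" by (simp add: mm_simps)
  also have "(SQ + S) ** L ** SQ = SQ" by (simp add: NL)
  finally show ?thesis .
qed


lemma core_dSig:
  fixes SQ S L Gi dG D dSQ :: "real^'m^'m"
  assumes LN: "L ** (SQ + S) = mat 1" and NL: "(SQ + S) ** L = mat 1" and eps: "eps \<noteq> 0"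
    and dSQ: "dSQ = - (eps *\<^sub>R (Gi ** dG ** Gi))" and SQ: "SQ = eps *\<^sub>R Gi"
  shows "dSQ - ((dSQ ** L + SQ ** (- (L ** (dSQ + D) ** L))) ** SQ + SQ ** L ** dSQ)
       = - ((1/eps) *\<^sub>R ((SQ - SQ ** L ** SQ) ** dG ** (SQ - SQ ** L ** SQ))) + SQ ** L ** D ** L ** SQ"
proof -
  have SL: "S ** L = mat 1 - SQ ** L" using NL by (simp add: mm_add_r algebra_simps)
  have LS: "L ** S = mat 1 - L ** SQ" using LN by (simp add: matrix_add_ldistrib algebra_simps)
  have Sig1: "SQ - SQ ** L ** SQ = S ** L ** SQ" by (simp add: SL mm_diff_r)
  have Sig2: "SQ - SQ ** L ** SQ = SQ ** L ** S"
  proof -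
    have "SQ ** L ** S = SQ ** (L ** S)" by (simp add: matrix_mul_assoc)
    also have "\<dots> = SQ ** (mat 1 - L ** SQ)" by (simp only: LS)
    also have "\<dots> = SQ - SQ ** L ** SQ" by (simp add: mm_diff_l matrix_mul_assoc)
    finally show ?thesis by simp
  qed
  have "(SQ - SQ ** L ** SQ) ** dG ** (SQ - SQ ** L ** SQ) = (S ** L ** SQ) ** dG ** (SQ ** L ** S)"
    by (simp only: Sig1[symmetric] Sig2[symmetric])
  also have "\<dots> = (eps * eps) *\<^sub>R (S ** L ** (Gi ** dG ** Gi) ** L ** S)"
    by (simp add: SQ mm_scale_l mm_scale_r matrix_mul_assoc)
  finally have e1: "- ((1/eps) *\<^sub>R ((SQ - SQ ** L ** SQ) ** dG ** (SQ - SQ ** L ** SQ)))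
      = S ** L ** dSQ ** L ** S"
    using eps by (simp add: dSQ mm_scale_l mm_scale_r mm_neg_l mm_neg_r matrix_mul_assoc)
  have e2: "S ** L ** dSQ ** L ** S = (mat 1 - SQ ** L) ** dSQ ** (mat 1 - L ** SQ)"
    by (simp add: SL[symmetric] LS[symmetric] matrix_mul_assoc)
  have e3: "(mat 1 - SQ ** L) ** dSQ ** (mat 1 - L ** SQ)
      = dSQ - dSQ ** L ** SQ - SQ ** L ** dSQ + SQ ** L ** dSQ ** L ** SQ"
    by (simp add: mm_diff_l mm_diff_r matrix_mul_assoc algebra_simps)
  have e4: "dSQ - ((dSQ ** L + SQ ** (- (L ** (dSQ + D) ** L))) ** SQ + SQ ** L ** dSQ)
      = dSQ - dSQ ** L ** SQ - SQ ** L ** dSQ + SQ ** L ** dSQ ** L ** SQ + SQ ** L ** D ** L ** SQ"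
    by (simp add: mm_add_r matrix_add_ldistrib mm_diff_l mm_diff_r mm_neg_l mm_neg_r matrix_mul_assoc algebra_simps)
  show ?thesis using e1 e2 e3 e4 by simp
qed


lemma step_identity:
  fixes A P0 dP :: "real^'n^'n" and B :: "real^'m^'n" and Sg dSg SQ L D dG :: "real^'m^'m"
  assumes P0: "transpose P0 = P0" and Sg: "transpose Sg = Sg" and SQ: "transpose SQ = SQ"
    and L: "transpose L = L" and dG: "dG = transpose B ** dP ** B"
    and dSg: "dSg = - ((1/eps) *\<^sub>R (Sg ** dG ** Sg)) + SQ ** L ** D ** L ** SQ" and eps: "eps \<noteq> 0"
  shows "transpose A ** dP ** A - (1/eps) *\<^sub>R (transpose A ** dP ** B ** Sg ** transpose B ** P0 ** A
           + transpose A ** P0 ** B ** dSg ** transpose B ** P0 ** A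
           + transpose A ** P0 ** B ** Sg ** transpose B ** dP ** A)
       = transpose (A + B ** (- (1/eps) *\<^sub>R (Sg ** transpose B ** P0 ** A))) ** dP
           ** (A + B ** (- (1/eps) *\<^sub>R (Sg ** transpose B ** P0 ** A)))
         - eps *\<^sub>R (transpose ((1/eps) *\<^sub>R (SQ ** transpose B ** P0 ** A)) ** L ** D ** L
           ** ((1/eps) *\<^sub>R (SQ ** transpose B ** P0 ** A)))"
proof -
  have "eps *\<^sub>R ((1/eps) *\<^sub>R X) = X" for X :: "real^'m^'m" using eps by simp
  show ?thesis
    using eps
    by (simp add: dSg dG mm_simps matrix_mul_assoc P0 Sg SQ L algebra_simps scaleR_diff_right scaleR_add_right)
qed


lemma Pi_step_formula:
  fixes Ak :: "real^'n^'n" and Bk :: "real^'m^'n" and Rk Sk :: "real^'m^'m" and Pn :: "real^'n^'n"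
  assumes eps: "eps > 0" and S: "psd_mat Sk" and P: "psd_mat Pn" and R: "pd_mat Rk"
  shows "Pi_step eps Ak Bk Rk Sk Pn = transpose Ak ** Pn ** Ak - (1/eps) *\<^sub>R
     (transpose Ak ** Pn ** Bk ** (eps *\<^sub>R matrix_inv (Rk + transpose Bk ** Pn ** Bk)
        - eps *\<^sub>R matrix_inv (Rk + transpose Bk ** Pn ** Bk) **
          matrix_inv (eps *\<^sub>R matrix_inv (Rk + transpose Bk ** Pn ** Bk) + Sk) **
          (eps *\<^sub>R matrix_inv (Rk + transpose Bk ** Pn ** Bk))) ** transpose Bk ** Pn ** Ak)"
  unfolding Pi_step_def sig_pi_formula[OF eps S P R] by simp

lemma Pi_step_psd:
  fixes Ak :: "real^'n^'n" and Bk :: "real^'m^'n" and Rk Sk :: "real^'m^'m" and Pn :: "real^'n^'n"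
  assumes eps: "eps > 0" and S: "psd_mat Sk" and P: "psd_mat Pn" and R: "pd_mat Rk"
  shows "psd_mat (Pi_step eps Ak Bk Rk Sk Pn)"
proof -
  define G where "G = Rk + transpose Bk ** Pn ** Bk"
  define Gi where "Gi = matrix_inv G"
  define SQ where "SQ = eps *\<^sub>R Gi"
  define L where "L = matrix_inv (SQ + Sk)"
  have Gpd: "pd_mat G" unfolding G_def using R psd_congr[OF P, of Bk] by (rule pd_add_psd)
  have Ginv: "invertible G" by (rule pd_invertible[OF Gpd])
  have Gisym: "transpose Gi = Gi" unfolding Gi_def using pd_inv[OF Gpd] by (rule sym_pd)
  have Psym: "transpose Pn = Pn" using P by (rule sym_psd)
  have SQpd: "pd_mat SQ" unfolding SQ_def Gi_def using pd_inv[OF Gpd] eps by (rule pd_scale)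
  have Npd: "pd_mat (SQ + Sk)" using SQpd S by (rule pd_add_psd)
  have Lpd: "pd_mat L" unfolding L_def by (rule pd_inv[OF Npd])
  have GiGGi: "Gi ** G ** Gi = Gi" unfolding Gi_def using inv_left[OF Ginv] by simp
  have form: "Pi_step eps Ak Bk Rk Sk Pn = transpose Ak ** Pn ** Ak - (1/eps) *\<^sub>R
     (transpose Ak ** Pn ** Bk ** (SQ - SQ ** L ** SQ) ** transpose Bk ** Pn ** Ak)"
    unfolding Pi_step_formula[OF eps S P R] G_def[symmetric] Gi_def[symmetric] SQ_def[symmetric] L_def[symmetric] ..
  define K1 where "K1 = - (Gi ** transpose Bk ** Pn)"
  define W where "W = Gi ** transpose Bk ** Pn"
  define Q1 where "Q1 = Pn - Pn ** Bk ** Gi ** transpose Bk ** Pn"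
  have Q1psd: "psd_mat Q1"
  proof -
    have e1: "transpose (mat 1 + Bk ** K1) ** Pn ** (mat 1 + Bk ** K1) + transpose K1 ** Rk ** K1
        = Pn + Pn ** Bk ** K1 + transpose K1 ** transpose Bk ** Pn + transpose K1 ** G ** K1"
      by (simp add: G_def mm_simps matrix_mul_assoc Psym algebra_simps)
    have e2: "transpose K1 ** G ** K1 = Pn ** Bk ** (Gi ** G ** Gi) ** transpose Bk ** Pn"
      by (simp add: K1_def mm_simps matrix_mul_assoc Psym Gisym)
    have e3: "Pn + Pn ** Bk ** K1 + transpose K1 ** transpose Bk ** Pn + Pn ** Bk ** Gi ** transpose Bk ** Pn = Q1"
      by (simp add: K1_def Q1_def mm_simps matrix_mul_assoc Psym Gisym)
    have "Q1 = transpose (mat 1 + Bk ** K1) ** Pn ** (mat 1 + Bk ** K1) + transpose K1 ** Rk ** K1"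
      using e1 e2 e3 GiGGi by simp
    moreover have "psd_mat (transpose K1 ** Rk ** K1)" by (rule psd_congr[OF pd_psd[OF R]])
    ultimately show ?thesis using psd_congr[OF P] psd_add by metis
  qed
  have Qeq: "Pn - (1/eps) *\<^sub>R (Pn ** Bk ** (SQ - SQ ** L ** SQ) ** transpose Bk ** Pn)
      = Q1 + eps *\<^sub>R (transpose W ** L ** W)"
    using eps by (simp add: Q1_def W_def SQ_def mm_simps matrix_mul_assoc Psym Gisym algebra_simps)
  have "psd_mat (Q1 + eps *\<^sub>R (transpose W ** L ** W))"
  proof -
    have "psd_mat (transpose W ** L ** W)" by (rule psd_congr[OF pd_psd[OF Lpd]])
    then have "psd_mat (eps *\<^sub>R (transpose W ** L ** W))" using eps by (intro psd_scale) auto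
    then show ?thesis using Q1psd by (intro psd_add)
  qed
  then have "psd_mat (transpose Ak ** (Pn - (1/eps) *\<^sub>R (Pn ** Bk ** (SQ - SQ ** L ** SQ) ** transpose Bk ** Pn)) ** Ak)"
    unfolding Qeq by (rule psd_congr)
  moreover have "transpose Ak ** (Pn - (1/eps) *\<^sub>R (Pn ** Bk ** (SQ - SQ ** L ** SQ) ** transpose Bk ** Pn)) ** Ak
     = Pi_step eps Ak Bk Rk Sk Pn"
    unfolding form by (simp add: mm_simps matrix_mul_assoc)
  ultimately show ?thesis by simp
qed


lemma Pi_T: "Pi eps A B R F T S' T = F"
  by (simp add: Pi_def)

lemma Pi_Suc:
  assumes "k < T"
  shows "Pi eps A B R F T S' k = Pi_step eps (A k) (B k) (R k) (S' k) (Pi eps A B R F T S' (Suc k))"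
proof -
  have e: "T - k = Suc (T - Suc k)" using assms by simp
  have e2: "T - Suc (T - Suc k) = k" using assms by simp
  show ?thesis unfolding Pi_def e by (simp add: Let_def e2)
qed

lemma md_eq: "md f D \<Longrightarrow> D = D' \<Longrightarrow> md f D'" by simp

lemma md_lconst: "md g G \<Longrightarrow> md (\<lambda>t. C ** g t) (C ** G)"
  using md_mult[OF md_const[of C]] by simp

lemma md_rconst: "md f F \<Longrightarrow> md (\<lambda>t. f t ** C) (F ** C)"
  using md_mult[OF _ md_const[of C]] by simp

lemma md_addc: "md g G \<Longrightarrow> md (\<lambda>t. C + g t) G"
  using md_add[OF md_const[of C]] by simp

locale ctx =
  fixes eps :: real and A :: "nat \<Rightarrow> real^'n^'n" and B :: "nat \<Rightarrow> real^'m^'n"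
    and R :: "nat \<Rightarrow> real^'m^'m" and F :: "real^'n^'n" and T :: nat
    and Sbar S :: "nat \<Rightarrow> real^'m^'m"
  assumes eps: "eps > 0" and Rpd: "\<And>k. k < T \<Longrightarrow> pd_mat (R k)" and Fpsd: "psd_mat F"
    and Sbar: "\<And>k. k < T \<Longrightarrow> psd_mat (Sbar k)" and Spsd: "\<And>k. k < T \<Longrightarrow> psd_mat (S k)"
begin

definition St :: "real \<Rightarrow> nat \<Rightarrow> real^'m^'m" where
  "St t = (\<lambda>k. Sbar k + t *\<^sub>R (S k - Sbar k))"

definition D :: "nat \<Rightarrow> real^'m^'m" where "D k = S k - Sbar k"

lemma St0: "St 0 = Sbar" by (simp add: St_def fun_eq_iff)

lemma St_psd:
  assumes t: "t \<in> X01" and k: "k < T" shows "psd_mat (St t k)"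
proof -
  have "St t k = (1 - t) *\<^sub>R Sbar k + t *\<^sub>R S k" by (simp add: St_def algebra_simps)
  then show ?thesis using t Sbar[OF k] Spsd[OF k] by (auto intro!: psd_add psd_scale)
qed

lemma md_St: "md (\<lambda>t. St t k) (D k)"
  unfolding St_def D_def by (rule md_line)

abbreviation PP where "PP t k \<equiv> Pi eps A B R F T (St t) k"

lemma PP_psd: "k \<le> T \<Longrightarrow> t \<in> X01 \<Longrightarrow> psd_mat (PP t k)"
proof (induction k rule: inc_induct)
  case base
  then show ?case by (simp add: Pi_T Fpsd)
next
  case (step k)
  then show ?case
    by (simp add: Pi_Suc Pi_step_psd eps St_psd Rpd)
qed

definition P0 where "P0 k = Pi eps A B R F T Sbar k"
definition Gm where "Gm k = R k + transpose (B k) ** P0 (Suc k) ** B k"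
definition Gi where "Gi k = matrix_inv (Gm k)"
definition SQm where "SQm k = eps *\<^sub>R Gi k"
definition Lm where "Lm k = matrix_inv (SQm k + Sbar k)"
definition Sgm where "Sgm k = SQm k - SQm k ** Lm k ** SQm k"
definition Km where "Km k = - (1/eps) *\<^sub>R (Sgm k ** transpose (B k) ** P0 (Suc k) ** A k)"
definition Mm where "Mm k = A k + B k ** Km k"
definition Em where "Em k = (1/eps) *\<^sub>R (SQm k ** transpose (B k) ** P0 (Suc k) ** A k)"

primrec dPr :: "nat \<Rightarrow> real^'n^'n" where
  "dPr 0 = 0"
| "dPr (Suc j) = (let k = T - Suc j in
     transpose (Mm k) ** dPr j ** Mm k - eps *\<^sub>R (transpose (Em k) ** Lm k ** D k ** Lm k ** Em k))"

definition dPi where "dPi k = dPr (T - k)"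

lemma dPi_T: "dPi T = 0" by (simp add: dPi_def)

lemma dPi_Suc:
  assumes "k < T"
  shows "dPi k = transpose (Mm k) ** dPi (Suc k) ** Mm k - eps *\<^sub>R (transpose (Em k) ** Lm k ** D k ** Lm k ** Em k)"
proof -
  have e: "T - k = Suc (T - Suc k)" using assms by simp
  have e2: "T - Suc (T - Suc k) = k" using assms by simp
  show ?thesis unfolding dPi_def e by (simp add: Let_def e2)
qed

lemma P0_psd: "k \<le> T \<Longrightarrow> psd_mat (P0 k)"
  using PP_psd[of k 0] by (simp add: P0_def St0)

lemma Gm_pd: "k < T \<Longrightarrow> pd_mat (Gm k)"
  unfolding Gm_def using Rpd psd_congr[OF P0_psd[of "Suc k"]] by (intro pd_add_psd) auto

lemma SQm_pd: "k < T \<Longrightarrow> pd_mat (SQm k)"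
  unfolding SQm_def Gi_def using pd_inv[OF Gm_pd] eps by (intro pd_scale) auto

lemma N_pd: "k < T \<Longrightarrow> pd_mat (SQm k + Sbar k)"
  using SQm_pd Sbar by (intro pd_add_psd)

lemma Lm_pd: "k < T \<Longrightarrow> pd_mat (Lm k)"
  unfolding Lm_def by (intro pd_inv N_pd)

end


context ctx begin

lemma SQm_sym: "k < T \<Longrightarrow> transpose (SQm k) = SQm k" by (rule sym_pd[OF SQm_pd])
lemma Lm_sym: "k < T \<Longrightarrow> transpose (Lm k) = Lm k" by (rule sym_pd[OF Lm_pd])
lemma Sgm_sym: "k < T \<Longrightarrow> transpose (Sgm k) = Sgm k"
  by (simp add: Sgm_def tr_diff matrix_transpose_mul SQm_sym Lm_sym matrix_mul_assoc)
lemma P0_sym: "k \<le> T \<Longrightarrow> transpose (P0 k) = P0 k" by (rule sym_psd[OF P0_psd])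

lemma Gm_inv: "k < T \<Longrightarrow> invertible (Gm k)" by (rule pd_invertible[OF Gm_pd])
lemma N_inv: "k < T \<Longrightarrow> invertible (SQm k + Sbar k)" by (rule pd_invertible[OF N_pd])

lemma step_derivs:
  assumes k: "k < T" and mdP: "md (\<lambda>t. PP t (Suc k)) dPn"
  shows "md (\<lambda>t. eps *\<^sub>R matrix_inv (R k + transpose (B k) ** PP t (Suc k) ** B k))
             (eps *\<^sub>R (- (Gi k ** (transpose (B k) ** dPn ** B k) ** Gi k)))"
    and "md (\<lambda>t. PP t k) (transpose (Mm k) ** dPn ** Mm k - eps *\<^sub>R (transpose (Em k) ** Lm k ** D k ** Lm k ** Em k))"
proof -
  define Pf where "Pf = (\<lambda>t. PP t (Suc k))"
  have mdP': "md Pf dPn" using mdP by (simp add: Pf_def)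
  have Pf0: "Pf 0 = P0 (Suc k)" by (simp add: Pf_def P0_def St0)
  have Pfpsd: "psd_mat (Pf t)" if "t \<in> X01" for t using PP_psd[of "Suc k" t] k that by (simp add: Pf_def)
  define Gf where "Gf = (\<lambda>t. R k + transpose (B k) ** Pf t ** B k)"
  define dG where "dG = transpose (B k) ** dPn ** B k"
  have mdG: "md Gf dG" unfolding Gf_def dG_def by (rule md_addc[OF md_rconst[OF md_lconst[OF mdP']]])
  have Gf0: "Gf 0 = Gm k" by (simp add: Gf_def Gm_def Pf0)
  have Gpd: "pd_mat (Gf t)" if "t \<in> X01" for t
    unfolding Gf_def using Rpd[OF k] psd_congr[OF Pfpsd[OF that]] by (rule pd_add_psd)
  define SQf where "SQf = (\<lambda>t. eps *\<^sub>R matrix_inv (Gf t))"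
  define dSQ where "dSQ = eps *\<^sub>R (- (Gi k ** dG ** Gi k))"
  have mi: "md (\<lambda>t. matrix_inv (Gf t)) (- (matrix_inv (Gf 0) ** dG ** matrix_inv (Gf 0)))"
    by (rule md_inv[OF mdG]) (rule pd_invertible[OF Gpd])
  have mdSQ: "md SQf dSQ" unfolding SQf_def dSQ_def using md_scale[OF mi, of eps] by (simp add: Gf0 Gi_def)
  show "md (\<lambda>t. eps *\<^sub>R matrix_inv (R k + transpose (B k) ** PP t (Suc k) ** B k))
             (eps *\<^sub>R (- (Gi k ** (transpose (B k) ** dPn ** B k) ** Gi k)))"
    using mdSQ by (simp add: SQf_def Gf_def Pf_def dSQ_def dG_def)
  have SQf0: "SQf 0 = SQm k" by (simp add: SQf_def Gf0 SQm_def Gi_def)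
  have SQpd: "pd_mat (SQf t)" if "t \<in> X01" for t
    unfolding SQf_def using pd_inv[OF Gpd[OF that]] eps by (rule pd_scale)
  define Nf where "Nf = (\<lambda>t. SQf t + St t k)"
  have mdN: "md Nf (dSQ + D k)" unfolding Nf_def by (rule md_add[OF mdSQ md_St])
  have Npd: "pd_mat (Nf t)" if "t \<in> X01" for t
    unfolding Nf_def using SQpd[OF that] St_psd[OF that k] by (rule pd_add_psd)
  have Nf0: "Nf 0 = SQm k + Sbar k" by (simp add: Nf_def SQf0 St0)
  define Lf where "Lf = (\<lambda>t. matrix_inv (Nf t))"
  define dL where "dL = - (Lm k ** (dSQ + D k) ** Lm k)"
  have "md Lf (- (matrix_inv (Nf 0) ** (dSQ + D k) ** matrix_inv (Nf 0)))"
    unfolding Lf_def by (rule md_inv[OF mdN]) (rule pd_invertible[OF Npd])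
  then have mdL: "md Lf dL" by (simp add: dL_def Nf0 Lm_def)
  have Lf0: "Lf 0 = Lm k" by (simp add: Lf_def Nf0 Lm_def)
  define Sgf where "Sgf = (\<lambda>t. SQf t - SQf t ** Lf t ** SQf t)"
  define dSg where "dSg = dSQ - ((dSQ ** Lm k + SQm k ** dL) ** SQm k + SQm k ** Lm k ** dSQ)"
  have mdSg: "md Sgf dSg"
    unfolding Sgf_def dSg_def
    by (rule md_eq[OF md_diff[OF mdSQ md_mult[OF md_mult[OF mdSQ mdL] mdSQ]]]) (simp add: SQf0 Lf0)
  have Sgf0: "Sgf 0 = Sgm k" by (simp add: Sgf_def SQf0 Lf0 Sgm_def)
  have core: "dSg = - ((1/eps) *\<^sub>R (Sgm k ** dG ** Sgm k)) + SQm k ** Lm k ** D k ** Lm k ** SQm k"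
    unfolding dSg_def dL_def Sgm_def
  proof (rule core_dSig)
    show "Lm k ** (SQm k + Sbar k) = mat 1" unfolding Lm_def by (rule inv_left[OF N_inv[OF k]])
    show "(SQm k + Sbar k) ** Lm k = mat 1" unfolding Lm_def by (rule inv_right[OF N_inv[OF k]])
    show "eps \<noteq> 0" using eps by simp
    show "dSQ = - (eps *\<^sub>R (Gi k ** dG ** Gi k))" by (simp add: dSQ_def)
    show "SQm k = eps *\<^sub>R Gi k" by (simp add: SQm_def)
  qed
  define P1 where "P1 = P0 (Suc k)"
  define dU where "dU = transpose (A k) ** dPn ** B k ** Sgm k ** transpose (B k) ** P1 ** A k
           + transpose (A k) ** P1 ** B k ** dSg ** transpose (B k) ** P1 ** A k
           + transpose (A k) ** P1 ** B k ** Sgm k ** transpose (B k) ** dPn ** A k"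
  define Uf where "Uf = (\<lambda>t. transpose (A k) ** Pf t ** B k ** Sgf t ** transpose (B k) ** Pf t ** A k)"
  have mdU: "md Uf dU"
    unfolding Uf_def
    by (rule md_eq[OF md_rconst[OF md_mult[OF md_rconst[OF md_mult[OF md_rconst[OF md_lconst[OF mdP']] mdSg]] mdP']]])
       (simp add: dU_def Pf0 Sgf0 P1_def mm_simps matrix_mul_assoc algebra_simps)
  define ff where "ff = (\<lambda>t. transpose (A k) ** Pf t ** A k - (1/eps) *\<^sub>R Uf t)"
  have mdff: "md ff (transpose (A k) ** dPn ** A k - (1/eps) *\<^sub>R dU)"
    unfolding ff_def by (rule md_diff[OF md_rconst[OF md_lconst[OF mdP']] md_scale[OF mdU]])
  have ffeq: "ff t = PP t k" if t: "t \<in> X01" for t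
  proof -
    have "PP t k = Pi_step eps (A k) (B k) (R k) (St t k) (Pf t)" by (simp add: Pi_Suc[OF k] Pf_def)
    also have "\<dots> = ff t"
      by (simp add: Pi_step_formula[OF eps St_psd[OF t k] Pfpsd[OF t] Rpd[OF k]] ff_def Uf_def Sgf_def
          SQf_def Lf_def Nf_def Gf_def)
    finally show ?thesis by simp
  qed
  have mdPP: "md (\<lambda>t. PP t k) (transpose (A k) ** dPn ** A k - (1/eps) *\<^sub>R dU)"
    by (rule md_cong[OF mdff ffeq])
  have "transpose (A k) ** dPn ** A k - (1/eps) *\<^sub>R dU
     = transpose (Mm k) ** dPn ** Mm k - eps *\<^sub>R (transpose (Em k) ** Lm k ** D k ** Lm k ** Em k)"
    unfolding dU_def Mm_def Km_def Em_def P1_def[symmetric]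
  proof (rule step_identity)
    show "transpose P1 = P1" unfolding P1_def using P0_sym k by simp
    show "transpose (Sgm k) = Sgm k" by (rule Sgm_sym[OF k])
    show "transpose (SQm k) = SQm k" by (rule SQm_sym[OF k])
    show "transpose (Lm k) = Lm k" by (rule Lm_sym[OF k])
    show "dG = transpose (B k) ** dPn ** B k" by (simp add: dG_def)
    show "dSg = - ((1/eps) *\<^sub>R (Sgm k ** dG ** Sgm k)) + SQm k ** Lm k ** D k ** Lm k ** SQm k" by (rule core)
    show "eps \<noteq> 0" using eps by simp
  qed
  then show "md (\<lambda>t. PP t k) (transpose (Mm k) ** dPn ** Mm k - eps *\<^sub>R (transpose (Em k) ** Lm k ** D k ** Lm k ** Em k))"
    using mdPP by simp
qed

lemma md_PP: "k \<le> T \<Longrightarrow> md (\<lambda>t. PP t k) (dPi k)"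
proof (induction k rule: inc_induct)
  case base
  show ?case using md_const[of F] by (simp add: Pi_T dPi_T)
next
  case (step k)
  show ?case unfolding dPi_Suc[OF step(2)] by (rule step_derivs(2)[OF step(2) step(3)])
qed

end


lemma trace_mm_add: "trace ((A::real^'a^'a) ** (B + C)) = trace (A ** B) + trace (A ** C)"
  by (simp add: matrix_add_ldistrib trace_add)

context ctx begin

definition dSQ where "dSQ k = eps *\<^sub>R (- (Gi k ** (transpose (B k) ** dPi (Suc k) ** B k) ** Gi k))"

lemma SigQ_eq: "Sig_Q eps A B R F T Sbar k = SQm k"
  by (simp add: Sig_Q_def SQm_def Gi_def Gm_def P0_def)

lemma Sigpi_eq: "k < T \<Longrightarrow> Sig_pi eps A B R F T Sbar k = Sgm k"
  unfolding Sig_pi_def Sgm_def SQm_def Lm_def Gi_def Gm_def P0_def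
  by (rule sig_pi_formula[OF eps Sbar P0_psd[unfolded P0_def] Rpd]) auto

lemma Pgain_eq: "k < T \<Longrightarrow> Pgain eps A B R F T Sbar k = Km k"
  by (simp add: Pgain_def Km_def Sigpi_eq P0_def)

abbreviation Xs where "Xs Sw Xini k \<equiv> Sig_x eps A B R F Sw Xini T Sbar k"

lemma X_Suc: "k < T \<Longrightarrow> Xs Sw Xini (Suc k) = Mm k ** Xs Sw Xini k ** transpose (Mm k) + B k ** Sgm k ** transpose (B k) + Sw k"
  by (simp add: Let_def Pgain_eq Sigpi_eq Mm_def)

lemma Jprime_eq: "Jprime eps A B R F Sw Xini T Sbar k =
   (eps/2) *\<^sub>R (Lm k ** (Sbar k + SQm k - Em k ** Xs Sw Xini k ** transpose (Em k)) ** Lm k)"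
  by (simp add: Jprime_def SigQ_eq Em_def Lm_def P0_def Let_def)

lemma tele_k:
  assumes k: "k < T"
  shows "trace (dPi k ** Xs Sw Xini k) - trace (dPi (Suc k) ** Xs Sw Xini (Suc k))
     = - trace (dPi (Suc k) ** (B k ** Sgm k ** transpose (B k))) - trace (dPi (Suc k) ** Sw k)
       - eps * trace (Lm k ** Em k ** Xs Sw Xini k ** transpose (Em k) ** Lm k ** D k)"
proof -
  define X where "X = Xs Sw Xini k"
  define dP' where "dP' = dPi (Suc k)"
  define M where "M = Mm k"
  define E where "E = Em k"
  define L where "L = Lm k"
  have h1: "trace (dPi k ** X) = trace (transpose M ** dP' ** M ** X)
       - eps * trace (transpose E ** L ** D k ** L ** E ** X)"
    by (simp add: dPi_Suc[OF k] mm_diff_r mm_scale_l trace_diff trace_scale M_def dP'_def E_def L_def)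
  have h2: "trace (transpose M ** dP' ** M ** X) = trace (dP' ** M ** X ** transpose M)"
    using trace_mul_sym[of "transpose M" "dP' ** M ** X"] by (simp add: matrix_mul_assoc)
  have h3: "trace (transpose E ** L ** D k ** L ** E ** X) = trace (L ** E ** X ** transpose E ** L ** D k)"
  proof -
    have "trace (transpose E ** L ** D k ** L ** E ** X) = trace (L ** D k ** L ** E ** X ** transpose E)"
      using trace_mul_sym[of "transpose E" "L ** D k ** L ** E ** X"] by (simp add: matrix_mul_assoc)
    also have "\<dots> = trace (L ** E ** X ** transpose E ** L ** D k)"
      using trace_mul_sym[of "L ** D k" "L ** E ** X ** transpose E"] by (simp add: matrix_mul_assoc)
    finally show ?thesis .
  qed
  have h4: "trace (dP' ** Xs Sw Xini (Suc k)) = trace (dP' ** M ** X ** transpose M)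
      + trace (dP' ** (B k ** Sgm k ** transpose (B k))) + trace (dP' ** Sw k)"
    unfolding X_Suc[OF k] by (simp add: trace_mm_add M_def X_def matrix_mul_assoc)
  show ?thesis
    using h1 h2 h3 h4 by (simp add: X_def dP'_def E_def L_def)
qed

lemma logterm_k:
  assumes k: "k < T"
  shows "eps * (trace (matrix_inv (Sbar k + SQm k) ** (D k + dSQ k)) - trace (matrix_inv (SQm k) ** dSQ k))
     = eps * trace (Lm k ** D k) + trace (dPi (Suc k) ** (B k ** Sgm k ** transpose (B k)))"
proof -
  define G where "G = Gm k"
  define Gv where "Gv = Gi k"
  define L where "L = Lm k"
  define dG where "dG = transpose (B k) ** dPi (Suc k) ** B k"
  have Ginv: "invertible G" unfolding G_def by (rule Gm_inv[OF k])
  have GGv: "G ** Gv = mat 1" unfolding G_def Gv_def Gi_def by (rule inv_right[OF Gm_inv[OF k]])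
  have L': "matrix_inv (Sbar k + SQm k) = L" by (simp add: L_def Lm_def add.commute)
  have SQi: "matrix_inv (SQm k) = (1/eps) *\<^sub>R G"
    using eps by (simp add: SQm_def Gi_def inv_scaleR inv_invertible[OF Ginv[unfolded G_def]] inv_inv[OF Ginv[unfolded G_def]] G_def)
  have dSQ': "dSQ k = - (eps *\<^sub>R (Gv ** dG ** Gv))" by (simp add: dSQ_def Gv_def dG_def)
  have t1: "trace (L ** dSQ k) = - eps * trace (Gv ** L ** Gv ** dG)"
  proof -
    have "trace (L ** dSQ k) = - eps * trace (L ** Gv ** dG ** Gv)"
      by (simp add: dSQ' mm_neg_r mm_scale_r trace_neg trace_scale matrix_mul_assoc)
    also have "trace (L ** Gv ** dG ** Gv) = trace (Gv ** L ** Gv ** dG)"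
      using trace_mul_sym[of "L ** Gv ** dG" Gv] by (simp add: matrix_mul_assoc)
    finally show ?thesis .
  qed
  have t2: "trace (matrix_inv (SQm k) ** dSQ k) = - trace (Gv ** dG)"
  proof -
    have "trace (matrix_inv (SQm k) ** dSQ k) = - trace (G ** Gv ** dG ** Gv)"
      using eps by (simp add: SQi dSQ' mm_neg_r mm_scale_r mm_scale_l trace_neg trace_scale matrix_mul_assoc)
    also have "G ** Gv ** dG ** Gv = dG ** Gv" by (simp add: GGv)
    also have "trace (dG ** Gv) = trace (Gv ** dG)" by (rule trace_mul_sym)
    finally show ?thesis .
  qed
  have t3: "trace (dPi (Suc k) ** (B k ** Sgm k ** transpose (B k))) = eps * trace (Gv ** dG) - eps * eps * trace (Gv ** L ** Gv ** dG)"
  proof -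
    have "trace (dPi (Suc k) ** (B k ** Sgm k ** transpose (B k))) = trace (Sgm k ** dG)"
      using trace_mul_sym[of "dPi (Suc k) ** B k" "Sgm k ** transpose (B k)"]
            trace_mul_sym[of "Sgm k" "transpose (B k) ** dPi (Suc k) ** B k"]
      by (simp add: dG_def matrix_mul_assoc)
    also have "\<dots> = eps * trace (Gv ** dG) - eps * eps * trace (Gv ** L ** Gv ** dG)"
      by (simp add: Sgm_def SQm_def Gv_def L_def mm_diff_r mm_scale_l mm_scale_r trace_diff trace_scale matrix_mul_assoc)
    finally show ?thesis .
  qed
  show ?thesis
  proof -
    have Lk: "Lm k = L" by (simp add: L_def)
    show ?thesis unfolding L' t3 Lk by (simp add: trace_mm_add t1 t2 algebra_simps)
  qed
qed

lemma Jp_k: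
  assumes k: "k < T"
  shows "trace (Jprime eps A B R F Sw Xini T Sbar k ** D k)
     = (eps/2) * (trace (Lm k ** D k) - trace (Lm k ** Em k ** Xs Sw Xini k ** transpose (Em k) ** Lm k ** D k))"
proof -
  have LN: "Lm k ** (Sbar k + SQm k) = mat 1"
    unfolding Lm_def using inv_left[OF N_inv[OF k]] by (simp add: add.commute)
  have "Lm k ** (Sbar k + SQm k - Em k ** Xs Sw Xini k ** transpose (Em k)) ** Lm k
      = Lm k - Lm k ** Em k ** Xs Sw Xini k ** transpose (Em k) ** Lm k"
  proof -
    have "Lm k ** (Sbar k + SQm k - Em k ** Xs Sw Xini k ** transpose (Em k)) ** Lm k
       = Lm k ** (Sbar k + SQm k) ** Lm k - Lm k ** (Em k ** Xs Sw Xini k ** transpose (Em k)) ** Lm k"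
      by (simp add: mm_diff_l mm_diff_r)
    then show ?thesis by (simp add: LN matrix_mul_assoc)
  qed
  then show ?thesis
    by (simp add: Jprime_eq mm_scale_l trace_scale mm_diff_r trace_diff matrix_mul_assoc)
qed

end


context ctx begin

lemma SQt_md: "k < T \<Longrightarrow> md (\<lambda>t. Sig_Q eps A B R F T (St t) k) (dSQ k)"
  unfolding Sig_Q_def dSQ_def Pi_def[symmetric]
  using step_derivs(1)[OF _ md_PP[of "Suc k"]] by simp

lemma SQt_pd: "k < T \<Longrightarrow> t \<in> X01 \<Longrightarrow> pd_mat (Sig_Q eps A B R F T (St t) k)"
  unfolding Sig_Q_def using eps Rpd psd_congr[OF PP_psd[of "Suc k" t]]
  by (intro pd_scale pd_inv pd_add_psd) auto

lemma SQt0: "Sig_Q eps A B R F T (St 0) k = SQm k"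
  using SigQ_eq by (simp add: St0)

lemma J_deriv:
  "((\<lambda>t. Jcheck eps A B R F Sw Xini T (St t)) has_real_derivative
     (\<Sum>k<T. trace (Jprime eps A B R F Sw Xini T Sbar k ** D k))) (at 0 within X01)"
proof -
  define SQt where "SQt k t = Sig_Q eps A B R F T (St t) k" for k t
  define J2 where "J2 t = (1/2) * (trace (PP t 0 ** Xini)
       + (\<Sum>k<T. eps * (ln (det (St t k + SQt k t)) - ln (det (SQt k t)))
                 + trace (PP t (Suc k) ** Sw k)))" for t
  define dJ where "dJ = (1/2) * (trace (dPi 0 ** Xini)
       + (\<Sum>k<T. eps * (trace (matrix_inv (Sbar k + SQm k) ** (D k + dSQ k)) - trace (matrix_inv (SQm k) ** dSQ k))
                 + trace (dPi (Suc k) ** Sw k)))"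
  have dJ2: "(J2 has_real_derivative dJ) (at 0 within X01)"
    unfolding J2_def dJ_def
  proof (intro DERIV_cmult DERIV_add DERIV_sum DERIV_diff)
    show "((\<lambda>t. trace (PP t 0 ** Xini)) has_real_derivative trace (dPi 0 ** Xini)) (at 0 within X01)"
      by (rule trace_deriv[OF md_rconst[OF md_PP]]) simp
  next
    fix k assume "k \<in> {..<T}"
    hence k: "k < T" by simp
    show "((\<lambda>t. trace (PP t (Suc k) ** Sw k)) has_real_derivative trace (dPi (Suc k) ** Sw k)) (at 0 within X01)"
      by (rule trace_deriv[OF md_rconst[OF md_PP]]) (use k in simp)
    have mdS: "md (SQt k) (dSQ k)" unfolding SQt_def using SQt_md[OF k] by simp
    have S0: "SQt k 0 = SQm k" by (simp add: SQt_def SQt0)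
    have "((\<lambda>t. ln (det (St t k + SQt k t))) has_real_derivative
        trace (matrix_inv (St 0 k + SQt k 0) ** (D k + dSQ k))) (at 0 within X01)"
    proof (rule lndet_deriv)
      show "md (\<lambda>t. St t k + SQt k t) (D k + dSQ k)" by (rule md_add[OF md_St mdS])
      show "0 < det (St 0 k + SQt k 0)" unfolding S0 St0
        using Sbar[OF k] SQm_pd[OF k] by (intro pd_det_pos psd_add_pd)
    qed
    then show "((\<lambda>t. ln (det (St t k + SQt k t))) has_real_derivative
        trace (matrix_inv (Sbar k + SQm k) ** (D k + dSQ k))) (at 0 within X01)"
      by (simp add: S0 St0)
    have "((\<lambda>t. ln (det (SQt k t))) has_real_derivative trace (matrix_inv (SQt k 0) ** dSQ k)) (at 0 within X01)"
      by (rule lndet_deriv[OF mdS]) (simp add: S0 pd_det_pos SQm_pd[OF k])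
    then show "((\<lambda>t. ln (det (SQt k t))) has_real_derivative trace (matrix_inv (SQm k) ** dSQ k)) (at 0 within X01)"
      by (simp add: S0)
  qed
  have JJ2: "Jcheck eps A B R F Sw Xini T (St t) = J2 t" if t: "t \<in> X01" for t
  proof -
    have "ln (det (St t k + SQt k t) / det (SQt k t)) = ln (det (St t k + SQt k t)) - ln (det (SQt k t))"
      if k: "k \<in> {..<T}" for k
    proof -
      have kT: "k < T" using k by simp
      have "0 < det (SQt k t)" unfolding SQt_def by (rule pd_det_pos[OF SQt_pd[OF kT t]])
      moreover have "0 < det (St t k + SQt k t)" unfolding SQt_def
        by (rule pd_det_pos[OF psd_add_pd[OF St_psd[OF t kT] SQt_pd[OF kT t]]])
      ultimately show ?thesis by (simp add: ln_div)
    qed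
    then show ?thesis unfolding Jcheck_def J2_def SQt_def by simp
  qed
  have dJ_eq: "dJ = (\<Sum>k<T. trace (Jprime eps A B R F Sw Xini T Sbar k ** D k))"
  proof -
    have tel: "trace (dPi 0 ** Xini) = (\<Sum>k<T. trace (dPi k ** Xs Sw Xini k) - trace (dPi (Suc k) ** Xs Sw Xini (Suc k)))"
      using sum_lessThan_telescope'[of "\<lambda>k. trace (dPi k ** Xs Sw Xini k)" T]
      by (simp add: dPi_T trace_zero del: Sig_x.simps(2))
    have "dJ = (1/2) * (\<Sum>k<T. (trace (dPi k ** Xs Sw Xini k) - trace (dPi (Suc k) ** Xs Sw Xini (Suc k)))
         + (eps * (trace (matrix_inv (Sbar k + SQm k) ** (D k + dSQ k)) - trace (matrix_inv (SQm k) ** dSQ k))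
                 + trace (dPi (Suc k) ** Sw k)))"
      unfolding dJ_def tel by (simp add: sum.distrib)
    also have "\<dots> = (1/2) * (\<Sum>k<T. eps * trace (Lm k ** D k) - eps * trace (Lm k ** Em k ** Xs Sw Xini k ** transpose (Em k) ** Lm k ** D k))"
      by (intro arg_cong[where f="\<lambda>x. (1/2) * x"] sum.cong refl) (simp add: tele_k logterm_k del: Sig_x.simps(2))
    also have "\<dots> = (\<Sum>k<T. trace (Jprime eps A B R F Sw Xini T Sbar k ** D k))"
      by (simp add: sum_distrib_left Jp_k algebra_simps)
    finally show ?thesis .
  qed
  have "((\<lambda>t. Jcheck eps A B R F Sw Xini T (St t)) has_real_derivative dJ) (at 0 within X01)"
    by (rule has_field_derivative_transform_within[OF dJ2, of 1]) (auto simp: JJ2)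
  then show ?thesis by (simp add: dJ_eq)
qed

end


theorem lemma5:
  fixes eps :: real and T :: nat
    and A :: "nat \<Rightarrow> real^'n^'n" and B :: "nat \<Rightarrow> real^'m^'n"
    and R :: "nat \<Rightarrow> real^'m^'m" and Sw :: "nat \<Rightarrow> real^'n^'n"
    and F Xini :: "real^'n^'n"
    and Sbar S :: "nat \<Rightarrow> real^'m^'m"
  assumes "T \<ge> 1" and "eps > 0"
    and "\<And>k. k < T \<Longrightarrow> pd_mat (R k)"
    and "\<And>k. k < T \<Longrightarrow> pd_mat (Sw k)"
    and "psd_mat F" and "psd_mat Xini"
    and "\<And>k. k < T \<Longrightarrow> psd_mat (Sbar k)"
    and "\<And>k. k < T \<Longrightarrow> psd_mat (S k)"
  shows "((\<lambda>t. (Jcheck eps A B R F Sw Xini T (\<lambda>k. Sbar k + t *\<^sub>R (S k - Sbar k))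
                 - Jcheck eps A B R F Sw Xini T Sbar) / t)
          \<longlongrightarrow> (\<Sum>k<T. trace (Jprime eps A B R F Sw Xini T Sbar k ** (S k - Sbar k))))
         (at_right 0)"
proof -
  interpret ctx eps A B R F T Sbar S
    by unfold_locales (use assms in auto)
  have "((\<lambda>t. Jcheck eps A B R F Sw Xini T (St t)) has_real_derivative
     (\<Sum>k<T. trace (Jprime eps A B R F Sw Xini T Sbar k ** D k))) (at 0 within {0..1})"
    by (rule J_deriv)
  then have "((\<lambda>y. (Jcheck eps A B R F Sw Xini T (St y) - Jcheck eps A B R F Sw Xini T (St 0)) / (y - 0))
      \<longlongrightarrow> (\<Sum>k<T. trace (Jprime eps A B R F Sw Xini T Sbar k ** D k))) (at 0 within {0..1})"
    by (simp add: has_field_derivative_iff)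
  moreover have "at (0::real) within {0..1} = at_right 0" by (rule at_within_Icc_at_right) simp
  ultimately show ?thesis by (simp add: St_def D_def St0[unfolded St_def])
qed


end
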